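(* Fix $k\in\mathbb N$. Let $g:\Omega\times\mathbb R\to\mathbb R$ be measurable and suppose there is $C\in L^2(\Omega)$ (resp. $C\in L^\infty(\Omega)$) with $$|g(\omega,z)|\mathbf 1_{|z|\le1}\le C(\omega)|z|,\qquad |g(\omega,z)+g(\omega,-z)|\mathbf 1_{|z|\le1}\le C(\omega)|z|^2 .$$ Then the limit $\lim_{\alpha\downarrow0}\int_{\alpha<|z|\le1}g(\omega,z)D^kc(\omega,z)\chi(dz)$ exists in $L^2(\Omega)$ (resp. in $L^\infty(\Omega)$), where $D^0c=c$.
   Context: $(\Omega,\mathcal G,\mu)$ is a probability space with an ergodic, jointly measurable group $\{\tau_x\}_{x\in\mathbb R}$ of measure-preserving maps; $T_xf(\omega)=f(\tau_x\omega)$ is a strongly continuous unitary group on $L^2(\Omega)$ with generator $D$ ($Df=\lim_{h\to0}h^{-1}(T_hf-f)$ in $L^2$), $D^k$ its iterates; $C^\infty(\Omega)$ is the set of $f$ in the domains of all $D^k$ with $|D^kf|_\infty<\infty$. $\chi$ is a symmetric Lévy measure on $\mathbb R$ ($\chi(dz)=\chi(-dz)$, $\int\min(1,z^2)\chi(dz)<\infty$). $c:\Omega\times\mathbb R\to[0,\infty)$ is bounded measurable with $c(\tau_z\omega,-z)=c(\omega,z)$ for $\mu$-a.e. $\omega$, $\chi$-a.e. $z$, and for $\chi$-a.e. $z$, $c(\cdot,z)\in C^\infty(\Omega)$ with $|D^kc(\cdot,z)|_\infty\le C_k$ for constants $C_k$ independent of $z$. *)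

theory Defs
  imports "HOL-Probability.Probability"
begin

definition ergodic_flow :: "'a measure \<Rightarrow> (real \<Rightarrow> 'a \<Rightarrow> 'a) \<Rightarrow> bool" where
  "ergodic_flow M \<tau> \<longleftrightarrow>
     (\<lambda>(x, \<omega>). \<tau> x \<omega>) \<in> measurable (borel \<Otimes>\<^sub>M M) M \<and>
     (\<forall>\<omega>\<in>space M. \<tau> 0 \<omega> = \<omega>) \<and>
     (\<forall>x y. \<forall>\<omega>\<in>space M. \<tau> (x + y) \<omega> = \<tau> x (\<tau> y \<omega>)) \<and>
     (\<forall>x. \<tau> x \<in> measurable M M \<and> distr M M (\<tau> x) = M) \<and>
     (\<forall>A\<in>sets M. (\<forall>x. \<tau> x -` A \<inter> space M = A) \<longrightarrow>
          emeasure M A = 0 \<or> emeasure M A = 1)"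

definition L2 :: "'a measure \<Rightarrow> ('a \<Rightarrow> real) \<Rightarrow> bool" where
  "L2 M f \<longleftrightarrow> f \<in> borel_measurable M \<and> integrable M (\<lambda>\<omega>. (f \<omega>)\<^sup>2)"

definition has_gen :: "'a measure \<Rightarrow> (real \<Rightarrow> 'a \<Rightarrow> 'a) \<Rightarrow> ('a \<Rightarrow> real) \<Rightarrow> ('a \<Rightarrow> real) \<Rightarrow> bool" where
  "has_gen M \<tau> f g \<longleftrightarrow> L2 M f \<and> L2 M g \<and>
     ((\<lambda>h. \<integral>\<omega>. ((f (\<tau> h \<omega>) - f \<omega>) / h - g \<omega>)\<^sup>2 \<partial>M) \<longlongrightarrow> 0) (at 0)"

fun is_Dpow :: "'a measure \<Rightarrow> (real \<Rightarrow> 'a \<Rightarrow> 'a) \<Rightarrow> nat \<Rightarrow> ('a \<Rightarrow> real) \<Rightarrow> ('a \<Rightarrow> real) \<Rightarrow> bool" where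
  "is_Dpow M \<tau> 0 f g \<longleftrightarrow> L2 M f \<and> L2 M g \<and> (AE \<omega> in M. g \<omega> = f \<omega>)"
| "is_Dpow M \<tau> (Suc k) f g \<longleftrightarrow> (\<exists>h. is_Dpow M \<tau> k f h \<and> has_gen M \<tau> h g)"

definition sym_levy_measure :: "real measure \<Rightarrow> bool" where
  "sym_levy_measure \<nu> \<longleftrightarrow> sets \<nu> = sets borel \<and> emeasure \<nu> {0} = 0 \<and>
     (\<integral>\<^sup>+ z. ennreal (min 1 (z\<^sup>2)) \<partial>\<nu>) < \<infinity> \<and>
     distr \<nu> borel uminus = \<nu>"

end

theory Submission
  imports Defs
begin


lemma flow_facts:
  assumes "ergodic_flow M \<tau>"
  shows flow_meas: "\<tau> x \<in> measurable M M"
    and flow_distr: "distr M M (\<tau> x) = M"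
    and flow_add: "\<omega> \<in> space M \<Longrightarrow> \<tau> (x + y) \<omega> = \<tau> x (\<tau> y \<omega>)"
    and flow_zero: "\<omega> \<in> space M \<Longrightarrow> \<tau> 0 \<omega> = \<omega>"
  using assms unfolding ergodic_flow_def by auto

lemma flow_space: "ergodic_flow M \<tau> \<Longrightarrow> \<omega> \<in> space M \<Longrightarrow> \<tau> x \<omega> \<in> space M"
  by (rule measurable_space[OF flow_meas])

lemma flow_comm: "ergodic_flow M \<tau> \<Longrightarrow> \<omega> \<in> space M \<Longrightarrow> \<tau> x (\<tau> y \<omega>) = \<tau> y (\<tau> x \<omega>)"
proof -
  assume a: "ergodic_flow M \<tau>" "\<omega> \<in> space M"
  have "\<tau> x (\<tau> y \<omega>) = \<tau> (x + y) \<omega>" using flow_add[OF a] by simp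
  also have "\<dots> = \<tau> (y + x) \<omega>" by (simp add: add.commute)
  also have "\<dots> = \<tau> y (\<tau> x \<omega>)" using flow_add[OF a] by simp
  finally show ?thesis .
qed

lemma flow_integral:
  fixes f :: "'a \<Rightarrow> real"
  assumes "ergodic_flow M \<tau>" "f \<in> borel_measurable M"
  shows "(\<integral>\<omega>. f (\<tau> x \<omega>) \<partial>M) = (\<integral>\<omega>. f \<omega> \<partial>M)"
proof -
  have "(\<integral>\<omega>. f \<omega> \<partial>M) = (\<integral>\<omega>. f \<omega> \<partial>distr M M (\<tau> x))" using flow_distr[OF assms(1)] by simp
  also have "\<dots> = (\<integral>\<omega>. f (\<tau> x \<omega>) \<partial>M)" by (rule integral_distr[OF flow_meas[OF assms(1)] assms(2)])
  finally show ?thesis by simp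
qed

lemma flow_integrable:
  fixes f :: "'a \<Rightarrow> real"
  assumes "ergodic_flow M \<tau>" "integrable M f"
  shows "integrable M (\<lambda>\<omega>. f (\<tau> x \<omega>))"
proof -
  have "integrable (distr M M (\<tau> x)) f" using flow_distr[OF assms(1), of x] assms(2) by simp
  then show ?thesis using integrable_distr_eq[OF flow_meas[OF assms(1)] borel_measurable_integrable[OF assms(2)]] by blast
qed

lemma flow_AE:
  assumes "ergodic_flow M \<tau>" "AE \<omega> in M. P \<omega>" "{\<omega>\<in>space M. P \<omega>} \<in> sets M"
  shows "AE \<omega> in M. P (\<tau> x \<omega>)"
proof -
  have "AE \<omega> in distr M M (\<tau> x). P \<omega>" by (subst flow_distr[OF assms(1)]) (rule assms(2))
  then show ?thesis using AE_distr_iff[OF flow_meas[OF assms(1)] assms(3)] by simp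
qed




lemma L2_meas: "L2 M f \<Longrightarrow> f \<in> borel_measurable M" by (simp add: L2_def)
lemma L2_sq: "L2 M f \<Longrightarrow> integrable M (\<lambda>\<omega>. (f \<omega>)\<^sup>2)" by (simp add: L2_def)

lemma L2_add:
  assumes "L2 M f" "L2 M g"
  shows "L2 M (\<lambda>\<omega>. f \<omega> + g \<omega>)"
proof -
  have m: "f \<in> borel_measurable M" "g \<in> borel_measurable M" using assms by (auto simp: L2_def)
  have i: "integrable M (\<lambda>\<omega>. 2 * (f \<omega>)\<^sup>2 + 2 * (g \<omega>)\<^sup>2)" using assms by (auto simp: L2_def)
  have "integrable M (\<lambda>\<omega>. (f \<omega> + g \<omega>)\<^sup>2)"
  proof (rule Bochner_Integration.integrable_bound[OF i])
    show "(\<lambda>\<omega>. (f \<omega> + g \<omega>)\<^sup>2) \<in> borel_measurable M" using m by measurable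
    show "AE x in M. norm ((f x + g x)\<^sup>2) \<le> norm (2 * (f x)\<^sup>2 + 2 * (g x)\<^sup>2)"
    proof (rule AE_I2)
      fix x
      have "0 \<le> (f x - g x)\<^sup>2" by simp
      then have "(f x + g x)\<^sup>2 \<le> 2 * (f x)\<^sup>2 + 2 * (g x)\<^sup>2"
        by (simp add: power2_eq_square algebra_simps)
      then show "norm ((f x + g x)\<^sup>2) \<le> norm (2 * (f x)\<^sup>2 + 2 * (g x)\<^sup>2)"
        by (simp add: abs_of_nonneg)
    qed
  qed
  then show ?thesis using m by (simp add: L2_def)
qed

lemma L2_cmult:
  assumes "L2 M f"
  shows "L2 M (\<lambda>\<omega>. a * f \<omega>)"
proof -
  have "integrable M (\<lambda>\<omega>. a\<^sup>2 * (f \<omega>)\<^sup>2)" using assms by (auto simp: L2_def)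
  moreover have "(\<lambda>\<omega>. a * f \<omega>) \<in> borel_measurable M" using L2_meas[OF assms] by measurable
  ultimately show ?thesis by (simp add: L2_def power_mult_distrib)
qed

lemma L2_uminus: "L2 M f \<Longrightarrow> L2 M (\<lambda>\<omega>. - f \<omega>)"
  using L2_cmult[of M f "-1"] by simp

lemma L2_diff: "L2 M f \<Longrightarrow> L2 M g \<Longrightarrow> L2 M (\<lambda>\<omega>. f \<omega> - g \<omega>)"
  using L2_add[of M f "\<lambda>\<omega>. - g \<omega>"] L2_uminus[of M g] by simp

lemma L2_flow:
  assumes "ergodic_flow M \<tau>" "L2 M f"
  shows "L2 M (\<lambda>\<omega>. f (\<tau> s \<omega>))"
proof -
  have "(\<lambda>\<omega>. f (\<tau> s \<omega>)) \<in> borel_measurable M"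
    using measurable_comp[OF flow_meas[OF assms(1)] L2_meas[OF assms(2)]] by (simp add: comp_def)
  moreover have "integrable M (\<lambda>\<omega>. (f (\<tau> s \<omega>))\<^sup>2)"
    using flow_integrable[OF assms(1) L2_sq[OF assms(2)]] by simp
  ultimately show ?thesis by (simp add: L2_def)
qed

lemma L2_cong_AE:
  assumes "L2 M f" "g \<in> borel_measurable M" "AE \<omega> in M. f \<omega> = g \<omega>"
  shows "L2 M g"
proof -
  have "integrable M (\<lambda>\<omega>. (f \<omega>)\<^sup>2) = integrable M (\<lambda>\<omega>. (g \<omega>)\<^sup>2)"
    by (rule integrable_cong_AE) (use assms L2_meas[OF assms(1)] in auto)
  then show ?thesis using assms by (simp add: L2_def)
qed

lemma L2_bounded:
  assumes "finite_measure M" "f \<in> borel_measurable M" "AE \<omega> in M. \<bar>f \<omega>\<bar> \<le> K"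
  shows "L2 M f"
proof -
  interpret finite_measure M by fact
  have "integrable M (\<lambda>\<omega>. (f \<omega>)\<^sup>2)"
  proof (rule integrable_const_bound[where B="K\<^sup>2"])
    show "AE x in M. norm ((f x)\<^sup>2) \<le> K\<^sup>2"
      using assms(3) by eventually_elim (metis abs_ge_zero power2_abs power_mono real_norm_def abs_power2)
  qed (use assms in measurable)
  then show ?thesis using assms by (simp add: L2_def)
qed

lemma L2_integrable:
  assumes "finite_measure M" "L2 M f"
  shows "integrable M f"
proof -
  interpret finite_measure M by fact
  have i: "integrable M (\<lambda>\<omega>. 1 + (f \<omega>)\<^sup>2)" using assms by (auto simp: L2_def)
  show ?thesis
  proof (rule Bochner_Integration.integrable_bound[OF i])
    show "f \<in> borel_measurable M" using assms by (simp add: L2_def)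
    show "AE x in M. norm (f x) \<le> norm (1 + (f x)\<^sup>2)"
    proof (rule AE_I2)
      fix x
      have "0 \<le> (\<bar>f x\<bar> - 1)\<^sup>2" by simp
      then have "\<bar>f x\<bar> \<le> 1 + (f x)\<^sup>2" by (simp add: power2_eq_square algebra_simps)
      then show "norm (f x) \<le> norm (1 + (f x)\<^sup>2)" by simp
    qed
  qed
qed

lemma L2_mult_bounded_integrable:
  assumes "finite_measure M" "L2 M f" "\<phi> \<in> borel_measurable M" "\<And>\<omega>. \<bar>\<phi> \<omega>\<bar> \<le> 1"
  shows "integrable M (\<lambda>\<omega>. f \<omega> * \<phi> \<omega>)"
proof (rule Bochner_Integration.integrable_bound[OF L2_integrable[OF assms(1,2)]])
  show "(\<lambda>\<omega>. f \<omega> * \<phi> \<omega>) \<in> borel_measurable M" using assms L2_meas by measurable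
  show "AE x in M. norm (f x * \<phi> x) \<le> norm (f x)"
    by (rule AE_I2) (simp add: abs_mult mult_left_le assms(4))
qed




lemma has_gen_L2: "has_gen M \<tau> f g \<Longrightarrow> L2 M f" "has_gen M \<tau> f g \<Longrightarrow> L2 M g"
  by (auto simp: has_gen_def)

lemma has_gen_flow:
  assumes fl: "ergodic_flow M \<tau>" and hg: "has_gen M \<tau> f g"
  shows "has_gen M \<tau> (\<lambda>\<omega>. f (\<tau> s \<omega>)) (\<lambda>\<omega>. g (\<tau> s \<omega>))"
proof -
  have Lf: "L2 M f" and Lg: "L2 M g" using hg by (auto simp: has_gen_def)
  note mf = L2_meas[OF Lf] and mg = L2_meas[OF Lg]
  note [measurable] = flow_meas[OF fl]
  have eq: "(\<integral>\<omega>. ((f (\<tau> s (\<tau> h \<omega>)) - f (\<tau> s \<omega>)) / h - g (\<tau> s \<omega>))\<^sup>2 \<partial>M)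
      = (\<integral>\<omega>. ((f (\<tau> h \<omega>) - f \<omega>) / h - g \<omega>)\<^sup>2 \<partial>M)" for h
  proof -
    have "(\<integral>\<omega>. ((f (\<tau> s (\<tau> h \<omega>)) - f (\<tau> s \<omega>)) / h - g (\<tau> s \<omega>))\<^sup>2 \<partial>M)
      = (\<integral>\<omega>. ((f (\<tau> h (\<tau> s \<omega>)) - f (\<tau> s \<omega>)) / h - g (\<tau> s \<omega>))\<^sup>2 \<partial>M)"
      by (rule Bochner_Integration.integral_cong) (auto simp: flow_comm[OF fl])
    also have "\<dots> = (\<integral>\<omega>. ((f (\<tau> h \<omega>) - f \<omega>) / h - g \<omega>)\<^sup>2 \<partial>M)"
      by (rule flow_integral[OF fl, where f="\<lambda>\<omega>. ((f (\<tau> h \<omega>) - f \<omega>) / h - g \<omega>)\<^sup>2"])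
         (use mf mg in measurable)
    finally show ?thesis .
  qed
  show ?thesis unfolding has_gen_def
    using L2_flow[OF fl Lf] L2_flow[OF fl Lg] hg by (simp add: has_gen_def eq)
qed

lemma has_gen_unique:
  assumes fl: "ergodic_flow M \<tau>" and h1: "has_gen M \<tau> f1 g1" and h2: "has_gen M \<tau> f2 g2"
    and ae: "AE \<omega> in M. f1 \<omega> = f2 \<omega>"
  shows "AE \<omega> in M. g1 \<omega> = g2 \<omega>"
proof -
  have L: "L2 M f1" "L2 M g1" "L2 M f2" "L2 M g2" using h1 h2 by (auto simp: has_gen_def)
  note m = L[THEN L2_meas]
  note [measurable] = flow_meas[OF fl] m
  define E1 where "E1 h \<omega> = (f1 (\<tau> h \<omega>) - f1 \<omega>) / h - g1 \<omega>" for h \<omega>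
  define E2 where "E2 h \<omega> = (f2 (\<tau> h \<omega>) - f2 \<omega>) / h - g2 \<omega>" for h \<omega>
  have LD: "L2 M (\<lambda>\<omega>. (f (\<tau> h \<omega>) - f \<omega>) / h - g \<omega>)" if "L2 M f" "L2 M g" for f g h
  proof -
    have "L2 M (\<lambda>\<omega>. (1/h) * (f (\<tau> h \<omega>) - f \<omega>) - g \<omega>)"
      by (intro L2_diff L2_cmult L2_flow[OF fl] that)
    then show ?thesis by simp
  qed
  have LE1: "L2 M (E1 h)" for h unfolding E1_def by (rule LD) (use L in auto)
  have LE2: "L2 M (E2 h)" for h unfolding E2_def by (rule LD) (use L in auto)
  have ae2: "AE \<omega> in M. f1 (\<tau> h \<omega>) = f2 (\<tau> h \<omega>)" for h
    by (rule flow_AE[OF fl ae]) measurable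
  have bound: "(\<integral>\<omega>. (g1 \<omega> - g2 \<omega>)\<^sup>2 \<partial>M) \<le> 2 * (\<integral>\<omega>. (E1 h \<omega>)\<^sup>2 \<partial>M) + 2 * (\<integral>\<omega>. (E2 h \<omega>)\<^sup>2 \<partial>M)" for h
  proof -
    have "(\<integral>\<omega>. (g1 \<omega> - g2 \<omega>)\<^sup>2 \<partial>M) \<le> (\<integral>\<omega>. 2 * (E1 h \<omega>)\<^sup>2 + 2 * (E2 h \<omega>)\<^sup>2 \<partial>M)"
    proof (rule integral_mono_AE)
      show "integrable M (\<lambda>\<omega>. (g1 \<omega> - g2 \<omega>)\<^sup>2)" using L2_diff[OF L(2,4)] by (simp add: L2_def)
      show "integrable M (\<lambda>\<omega>. 2 * (E1 h \<omega>)\<^sup>2 + 2 * (E2 h \<omega>)\<^sup>2)"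
        using LE1[of h] LE2[of h] by (simp add: L2_def)
      show "AE \<omega> in M. (g1 \<omega> - g2 \<omega>)\<^sup>2 \<le> 2 * (E1 h \<omega>)\<^sup>2 + 2 * (E2 h \<omega>)\<^sup>2"
        using ae ae2[of h]
      proof eventually_elim
        case (elim \<omega>)
        then have "g1 \<omega> - g2 \<omega> = E2 h \<omega> - E1 h \<omega>" unfolding E1_def E2_def by (simp add: field_simps)
        then have e: "(g1 \<omega> - g2 \<omega>)\<^sup>2 = (E2 h \<omega> - E1 h \<omega>)\<^sup>2" by simp
        have "0 \<le> (E2 h \<omega> + E1 h \<omega>)\<^sup>2" by simp
        then have "(E2 h \<omega> - E1 h \<omega>)\<^sup>2 \<le> 2 * (E1 h \<omega>)\<^sup>2 + 2 * (E2 h \<omega>)\<^sup>2"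
          by (simp add: power2_eq_square algebra_simps)
        then show ?case using e by simp
      qed
    qed
    also have "\<dots> = 2 * (\<integral>\<omega>. (E1 h \<omega>)\<^sup>2 \<partial>M) + 2 * (\<integral>\<omega>. (E2 h \<omega>)\<^sup>2 \<partial>M)"
      using LE1[of h] LE2[of h] by (simp add: L2_def)
    finally show ?thesis .
  qed
  have lim: "((\<lambda>h. 2 * (\<integral>\<omega>. (E1 h \<omega>)\<^sup>2 \<partial>M) + 2 * (\<integral>\<omega>. (E2 h \<omega>)\<^sup>2 \<partial>M)) \<longlongrightarrow> 0) (at 0)"
    using tendsto_add[OF tendsto_mult_left[OF h1[unfolded has_gen_def, THEN conjunct2, THEN conjunct2]]
                         tendsto_mult_left[OF h2[unfolded has_gen_def, THEN conjunct2, THEN conjunct2]], of 2 2]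
    unfolding E1_def E2_def by simp
  have "(\<integral>\<omega>. (g1 \<omega> - g2 \<omega>)\<^sup>2 \<partial>M) \<le> 0"
    by (rule tendsto_lowerbound[OF lim]) (auto intro: always_eventually bound)
  then have "(\<integral>\<omega>. (g1 \<omega> - g2 \<omega>)\<^sup>2 \<partial>M) = 0"
    by (simp add: antisym integral_nonneg_AE)
  then have "AE \<omega> in M. (g1 \<omega> - g2 \<omega>)\<^sup>2 = 0"
    using integral_nonneg_eq_0_iff_AE[of M "\<lambda>\<omega>. (g1 \<omega> - g2 \<omega>)\<^sup>2"] L2_diff[OF L(2,4)]
    by (simp add: L2_def)
  then show ?thesis by eventually_elim simp
qed




lemma is_Dpow_L2: "is_Dpow M \<tau> j f g \<Longrightarrow> L2 M g"
  by (cases j) (auto simp: has_gen_def)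

lemma is_Dpow_unique:
  assumes fl: "ergodic_flow M \<tau>"
  shows "is_Dpow M \<tau> j f1 g1 \<Longrightarrow> is_Dpow M \<tau> j f2 g2 \<Longrightarrow> AE \<omega> in M. f1 \<omega> = f2 \<omega>
     \<Longrightarrow> AE \<omega> in M. g1 \<omega> = g2 \<omega>"
proof (induction j arbitrary: g1 g2)
  case 0
  then show ?case by (auto elim: AE_mp)
next
  case (Suc j)
  from Suc.prems obtain h1 h2 where "is_Dpow M \<tau> j f1 h1" "has_gen M \<tau> h1 g1"
    "is_Dpow M \<tau> j f2 h2" "has_gen M \<tau> h2 g2" by auto
  with Suc.IH[of h1 h2] Suc.prems(3) show ?case
    using has_gen_unique[OF fl] by blast
qed

lemma is_Dpow_flow:
  assumes fl: "ergodic_flow M \<tau>"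
  shows "is_Dpow M \<tau> j f g \<Longrightarrow> is_Dpow M \<tau> j (\<lambda>\<omega>. f (\<tau> s \<omega>)) (\<lambda>\<omega>. g (\<tau> s \<omega>))"
proof (induction j arbitrary: g)
  case 0
  then have L: "L2 M f" "L2 M g" and ae: "AE \<omega> in M. g \<omega> = f \<omega>" by auto
  note [measurable] = L[THEN L2_meas] flow_meas[OF fl]
  have "AE \<omega> in M. g (\<tau> s \<omega>) = f (\<tau> s \<omega>)" by (rule flow_AE[OF fl ae]) measurable
  then show ?case using L2_flow[OF fl L(1)] L2_flow[OF fl L(2)] by simp
next
  case (Suc j)
  from Suc.prems obtain h where h: "is_Dpow M \<tau> j f h" "has_gen M \<tau> h g" by auto
  have "is_Dpow M \<tau> j (\<lambda>\<omega>. f (\<tau> s \<omega>)) (\<lambda>\<omega>. h (\<tau> s \<omega>))" by (rule Suc.IH[OF h(1)])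
  moreover have "has_gen M \<tau> (\<lambda>\<omega>. h (\<tau> s \<omega>)) (\<lambda>\<omega>. g (\<tau> s \<omega>))" by (rule has_gen_flow[OF fl h(2)])
  ultimately show ?case by auto
qed




lemma L1_le_sqrt_L2:
  assumes P: "prob_space M" and Y: "L2 M Y"
  shows "(\<integral>\<omega>. \<bar>Y \<omega>\<bar> \<partial>M) \<le> sqrt (\<integral>\<omega>. (Y \<omega>)\<^sup>2 \<partial>M)"
proof -
  interpret prob_space M by fact
  define m where "m = (\<integral>\<omega>. \<bar>Y \<omega>\<bar> \<partial>M)"
  have iY: "integrable M Y" by (rule L2_integrable[OF finite_measure Y])
  have iA: "integrable M (\<lambda>\<omega>. \<bar>Y \<omega>\<bar>)" using iY by simp
  have iS: "integrable M (\<lambda>\<omega>. (Y \<omega>)\<^sup>2)" using Y by (simp add: L2_def)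
  have "0 \<le> (\<integral>\<omega>. (\<bar>Y \<omega>\<bar> - m)\<^sup>2 \<partial>M)" by simp
  also have "(\<integral>\<omega>. (\<bar>Y \<omega>\<bar> - m)\<^sup>2 \<partial>M) = (\<integral>\<omega>. (Y \<omega>)\<^sup>2 - 2 * m * \<bar>Y \<omega>\<bar> + m\<^sup>2 \<partial>M)"
    by (rule Bochner_Integration.integral_cong) (simp_all add: power2_eq_square algebra_simps)
  also have "\<dots> = (\<integral>\<omega>. (Y \<omega>)\<^sup>2 \<partial>M) - 2 * m * m + m\<^sup>2"
    using iA iS prob_space by (simp add: m_def)
  finally have "m\<^sup>2 \<le> (\<integral>\<omega>. (Y \<omega>)\<^sup>2 \<partial>M)" by (simp add: power2_eq_square)
  then show ?thesis unfolding m_def by (rule real_le_rsqrt)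
qed

lemma flow_deriv:
  assumes P: "prob_space M" and fl: "ergodic_flow M \<tau>" and hg: "has_gen M \<tau> f g"
    and \<phi>m: "\<phi> \<in> borel_measurable M" and \<phi>b: "\<And>\<omega>. \<bar>\<phi> \<omega>\<bar> \<le> 1"
  shows "DERIV (\<lambda>t. \<integral>\<omega>. f (\<tau> t \<omega>) * \<phi> \<omega> \<partial>M) t :> (\<integral>\<omega>. g (\<tau> t \<omega>) * \<phi> \<omega> \<partial>M)"
proof -
  interpret prob_space M by fact
  have L: "L2 M f" "L2 M g" using hg by (auto simp: has_gen_def)
  note [measurable] = L[THEN L2_meas] flow_meas[OF fl] \<phi>m
  define E where "E h \<omega> = (f (\<tau> h \<omega>) - f \<omega>) / h - g \<omega>" for h \<omega>
  have LE: "L2 M (E h)" for h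
  proof -
    have "L2 M (\<lambda>\<omega>. (1/h) * (f (\<tau> h \<omega>) - f \<omega>) - g \<omega>)"
      by (intro L2_diff L2_cmult L2_flow[OF fl] L)
    then show ?thesis unfolding E_def by simp
  qed
  have LEt: "L2 M (\<lambda>\<omega>. E h (\<tau> t \<omega>))" for h by (rule L2_flow[OF fl LE])
  have int: "integrable M (\<lambda>\<omega>. F (\<tau> s \<omega>) * \<phi> \<omega>)" if "L2 M F" for F s
    by (rule L2_mult_bounded_integrable[OF finite_measure L2_flow[OF fl that] \<phi>m \<phi>b])
  have key: "((\<integral>\<omega>. f (\<tau> (t + h) \<omega>) * \<phi> \<omega> \<partial>M) - (\<integral>\<omega>. f (\<tau> t \<omega>) * \<phi> \<omega> \<partial>M)) / h
        - (\<integral>\<omega>. g (\<tau> t \<omega>) * \<phi> \<omega> \<partial>M) = (\<integral>\<omega>. E h (\<tau> t \<omega>) * \<phi> \<omega> \<partial>M)" for h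
  proof -
    have e1: "(\<integral>\<omega>. f (\<tau> (t + h) \<omega>) * \<phi> \<omega> \<partial>M) = (\<integral>\<omega>. f (\<tau> h (\<tau> t \<omega>)) * \<phi> \<omega> \<partial>M)"
      by (rule Bochner_Integration.integral_cong) (simp_all add: flow_add[OF fl, symmetric] add.commute)
    have i1: "integrable M (\<lambda>\<omega>. f (\<tau> h (\<tau> t \<omega>)) * \<phi> \<omega>)"
      using int[OF L2_flow[OF fl L(1), of h], of t] by simp
    have "(\<integral>\<omega>. E h (\<tau> t \<omega>) * \<phi> \<omega> \<partial>M) =
        (\<integral>\<omega>. (1/h) * (f (\<tau> h (\<tau> t \<omega>)) * \<phi> \<omega> - f (\<tau> t \<omega>) * \<phi> \<omega>) - g (\<tau> t \<omega>) * \<phi> \<omega> \<partial>M)"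
      by (rule Bochner_Integration.integral_cong) (simp_all add: E_def field_simps)
    also have "\<dots> = (1/h) * ((\<integral>\<omega>. f (\<tau> h (\<tau> t \<omega>)) * \<phi> \<omega> \<partial>M) - (\<integral>\<omega>. f (\<tau> t \<omega>) * \<phi> \<omega> \<partial>M))
        - (\<integral>\<omega>. g (\<tau> t \<omega>) * \<phi> \<omega> \<partial>M)"
      using i1 int[OF L(1), of t] int[OF L(2), of t] by simp
    finally show ?thesis using e1 by simp
  qed
  have bnd: "\<bar>\<integral>\<omega>. E h (\<tau> t \<omega>) * \<phi> \<omega> \<partial>M\<bar> \<le> sqrt (\<integral>\<omega>. (E h \<omega>)\<^sup>2 \<partial>M)" for h
  proof -
    have "\<bar>\<integral>\<omega>. E h (\<tau> t \<omega>) * \<phi> \<omega> \<partial>M\<bar> \<le> (\<integral>\<omega>. \<bar>E h (\<tau> t \<omega>) * \<phi> \<omega>\<bar> \<partial>M)" by simp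
    also have "\<dots> \<le> (\<integral>\<omega>. \<bar>E h (\<tau> t \<omega>)\<bar> \<partial>M)"
    proof (rule integral_mono)
      show "integrable M (\<lambda>\<omega>. \<bar>E h (\<tau> t \<omega>) * \<phi> \<omega>\<bar>)"
        using L2_mult_bounded_integrable[OF finite_measure LEt \<phi>m \<phi>b] by simp
      show "integrable M (\<lambda>\<omega>. \<bar>E h (\<tau> t \<omega>)\<bar>)"
        using L2_integrable[OF finite_measure LEt] by simp
    qed (simp add: abs_mult mult_left_le \<phi>b)
    also have "\<dots> \<le> sqrt (\<integral>\<omega>. (E h (\<tau> t \<omega>))\<^sup>2 \<partial>M)" by (rule L1_le_sqrt_L2[OF P LEt])
    also have "(\<integral>\<omega>. (E h (\<tau> t \<omega>))\<^sup>2 \<partial>M) = (\<integral>\<omega>. (E h \<omega>)\<^sup>2 \<partial>M)"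
      by (rule flow_integral[OF fl, where f="\<lambda>\<omega>. (E h \<omega>)\<^sup>2"]) (use L2_meas[OF LE[of h]] in measurable)
    finally show ?thesis .
  qed
  have lim0: "((\<lambda>h. \<integral>\<omega>. (E h \<omega>)\<^sup>2 \<partial>M) \<longlongrightarrow> 0) (at 0)"
    using hg unfolding has_gen_def E_def by simp
  have "((\<lambda>h. sqrt (\<integral>\<omega>. (E h \<omega>)\<^sup>2 \<partial>M)) \<longlongrightarrow> 0) (at 0)"
    using tendsto_real_sqrt[OF lim0] by simp
  then have "((\<lambda>h. \<integral>\<omega>. E h (\<tau> t \<omega>) * \<phi> \<omega> \<partial>M) \<longlongrightarrow> 0) (at 0)"
    by (rule Lim_null_comparison[rotated]) (use bnd in \<open>auto intro: always_eventually\<close>)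
  then have "((\<lambda>h. ((\<integral>\<omega>. f (\<tau> (t + h) \<omega>) * \<phi> \<omega> \<partial>M) - (\<integral>\<omega>. f (\<tau> t \<omega>) * \<phi> \<omega> \<partial>M)) / h
        - (\<integral>\<omega>. g (\<tau> t \<omega>) * \<phi> \<omega> \<partial>M)) \<longlongrightarrow> 0) (at 0)"
    by (simp add: key)
  then show ?thesis unfolding DERIV_def LIM_zero_iff .
qed




lemma AE_le_from_sets:
  fixes Y :: "'a \<Rightarrow> real"
  assumes fm: "finite_measure M" and iY: "integrable M Y"
    and H: "\<And>A. A \<in> sets M \<Longrightarrow> (\<integral>\<omega>. Y \<omega> * indicator A \<omega> \<partial>M) \<le> c * (\<integral>\<omega>. indicator A \<omega> \<partial>M)"
  shows "AE \<omega> in M. Y \<omega> \<le> c"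
proof -
  interpret finite_measure M by fact
  note [measurable] = borel_measurable_integrable[OF iY]
  define A where "A = {\<omega>\<in>space M. c < Y \<omega>}"
  have A: "A \<in> sets M" unfolding A_def by measurable
  have iI: "integrable M (\<lambda>\<omega>. indicator A \<omega> :: real)" using A by (simp add: integrable_indicator_iff less_top[symmetric])
  have iYA: "integrable M (\<lambda>\<omega>. Y \<omega> * indicator A \<omega>)"
  proof (rule Bochner_Integration.integrable_bound[OF iY])
    show "(\<lambda>\<omega>. Y \<omega> * indicator A \<omega>) \<in> borel_measurable M" using A by measurable
  qed (rule AE_I2, auto simp: indicator_def)
  have i2: "integrable M (\<lambda>\<omega>. (Y \<omega> - c) * indicator A \<omega>)"
    using iYA iI by (simp add: left_diff_distrib)
  have "(\<integral>\<omega>. (Y \<omega> - c) * indicator A \<omega> \<partial>M) = (\<integral>\<omega>. Y \<omega> * indicator A \<omega> \<partial>M) - c * (\<integral>\<omega>. indicator A \<omega> \<partial>M)"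
    using iYA iI by (simp add: left_diff_distrib)
  also have "\<dots> \<le> 0" using H[OF A] by simp
  finally have le: "(\<integral>\<omega>. (Y \<omega> - c) * indicator A \<omega> \<partial>M) \<le> 0" .
  have nn: "AE \<omega> in M. 0 \<le> (Y \<omega> - c) * indicator A \<omega>"
    by (rule AE_I2) (auto simp: A_def indicator_def)
  have "(\<integral>\<omega>. (Y \<omega> - c) * indicator A \<omega> \<partial>M) = 0"
    using le integral_nonneg_AE[OF nn] by simp
  then have "AE \<omega> in M. (Y \<omega> - c) * indicator A \<omega> = 0"
    using integral_nonneg_eq_0_iff_AE[OF i2 nn] by simp
  then show ?thesis
    by (rule AE_mp) (rule AE_I2, auto simp: A_def indicator_def)
qed

lemma flow_lip_test:
  assumes P: "prob_space M" and fl: "ergodic_flow M \<tau>" and hg: "has_gen M \<tau> f g"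
    and gb: "AE \<omega> in M. \<bar>g \<omega>\<bar> \<le> K"
    and \<phi>m: "\<phi> \<in> borel_measurable M" and \<phi>b: "\<And>\<omega>. \<bar>\<phi> \<omega>\<bar> \<le> 1"
  shows "\<bar>\<integral>\<omega>. (f (\<tau> s \<omega>) - f \<omega>) * \<phi> \<omega> \<partial>M\<bar> \<le> K * \<bar>s\<bar> * (\<integral>\<omega>. \<bar>\<phi> \<omega>\<bar> \<partial>M)"
proof -
  interpret prob_space M by fact
  have L: "L2 M f" "L2 M g" using hg by (auto simp: has_gen_def)
  note [measurable] = L[THEN L2_meas] flow_meas[OF fl] \<phi>m
  define u where "u t = (\<integral>\<omega>. f (\<tau> t \<omega>) * \<phi> \<omega> \<partial>M)" for t
  define u' where "u' t = (\<integral>\<omega>. g (\<tau> t \<omega>) * \<phi> \<omega> \<partial>M)" for t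
  have D: "DERIV u t :> u' t" for t unfolding u_def u'_def by (rule flow_deriv[OF P fl hg \<phi>m \<phi>b])
  have iphi: "integrable M (\<lambda>\<omega>. \<bar>\<phi> \<omega>\<bar>)"
    by (rule integrable_const_bound[where B=1]) (use \<phi>b in auto)
  have u'b: "\<bar>u' t\<bar> \<le> K * (\<integral>\<omega>. \<bar>\<phi> \<omega>\<bar> \<partial>M)" for t
  proof -
    have gbt: "AE \<omega> in M. \<bar>g (\<tau> t \<omega>)\<bar> \<le> K" by (rule flow_AE[OF fl gb]) measurable
    have "\<bar>u' t\<bar> \<le> (\<integral>\<omega>. \<bar>g (\<tau> t \<omega>) * \<phi> \<omega>\<bar> \<partial>M)" unfolding u'_def by simp
    also have "\<dots> \<le> (\<integral>\<omega>. K * \<bar>\<phi> \<omega>\<bar> \<partial>M)"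
    proof (rule integral_mono_AE)
      show "integrable M (\<lambda>\<omega>. \<bar>g (\<tau> t \<omega>) * \<phi> \<omega>\<bar>)"
        using L2_mult_bounded_integrable[OF finite_measure L2_flow[OF fl L(2)] \<phi>m \<phi>b] by simp
      show "integrable M (\<lambda>\<omega>. K * \<bar>\<phi> \<omega>\<bar>)" using iphi by simp
      show "AE \<omega> in M. \<bar>g (\<tau> t \<omega>) * \<phi> \<omega>\<bar> \<le> K * \<bar>\<phi> \<omega>\<bar>"
        using gbt by eventually_elim (simp add: abs_mult mult_right_mono)
    qed
    finally show ?thesis by simp
  qed
  have "\<bar>u s - u 0\<bar> \<le> K * \<bar>s\<bar> * (\<integral>\<omega>. \<bar>\<phi> \<omega>\<bar> \<partial>M)"
  proof (cases "s = 0")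
    case True
    then show ?thesis by simp
  next
    case False
    then consider "0 < s" | "s < 0" by linarith
    then show ?thesis
    proof cases
      case 1
      then obtain z where "u s - u 0 = (s - 0) * u' z" using MVT2[of 0 s u u'] D by blast
      then have "\<bar>u s - u 0\<bar> = s * \<bar>u' z\<bar>" using 1 by (simp add: abs_mult)
      also have "\<dots> \<le> s * (K * (\<integral>\<omega>. \<bar>\<phi> \<omega>\<bar> \<partial>M))" using u'b[of z] 1 by (simp add: mult_left_mono)
      finally show ?thesis using 1 by (simp add: mult_ac)
    next
      case 2
      then obtain z where "u 0 - u s = (0 - s) * u' z" using MVT2[of s 0 u u'] D by blast
      then have "\<bar>u s - u 0\<bar> = (- s) * \<bar>u' z\<bar>" using 2 by (simp add: abs_mult abs_minus_commute)
      also have "\<dots> \<le> (- s) * (K * (\<integral>\<omega>. \<bar>\<phi> \<omega>\<bar> \<partial>M))" using u'b[of z] 2 by (simp add: mult_left_mono)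
      finally show ?thesis using 2 by (simp add: mult_ac)
    qed
  qed
  moreover have "u s - u 0 = (\<integral>\<omega>. (f (\<tau> s \<omega>) - f \<omega>) * \<phi> \<omega> \<partial>M)"
  proof -
    have "u 0 = (\<integral>\<omega>. f \<omega> * \<phi> \<omega> \<partial>M)" unfolding u_def
      by (rule Bochner_Integration.integral_cong) (simp_all add: flow_zero[OF fl])
    moreover have "integrable M (\<lambda>\<omega>. f (\<tau> s \<omega>) * \<phi> \<omega>)"
      by (rule L2_mult_bounded_integrable[OF finite_measure L2_flow[OF fl L(1)] \<phi>m \<phi>b])
    moreover have "integrable M (\<lambda>\<omega>. f \<omega> * \<phi> \<omega>)"
      by (rule L2_mult_bounded_integrable[OF finite_measure L(1) \<phi>m \<phi>b])
    ultimately show ?thesis unfolding u_def by (simp add: left_diff_distrib)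
  qed
  ultimately show ?thesis by simp
qed

lemma flow_lip:
  assumes P: "prob_space M" and fl: "ergodic_flow M \<tau>" and hg: "has_gen M \<tau> f g"
    and gb: "AE \<omega> in M. \<bar>g \<omega>\<bar> \<le> K"
  shows "AE \<omega> in M. \<bar>f (\<tau> s \<omega>) - f \<omega>\<bar> \<le> K * \<bar>s\<bar>"
proof -
  interpret prob_space M by fact
  have L: "L2 M f" "L2 M g" using hg by (auto simp: has_gen_def)
  note [measurable] = L[THEN L2_meas] flow_meas[OF fl]
  have iX: "integrable M (\<lambda>\<omega>. f (\<tau> s \<omega>) - f \<omega>)"
    by (rule L2_integrable[OF finite_measure L2_diff[OF L2_flow[OF fl L(1)] L(1)]])
  have T: "\<bar>\<integral>\<omega>. (f (\<tau> s \<omega>) - f \<omega>) * indicator A \<omega> \<partial>M\<bar> \<le> K * \<bar>s\<bar> * (\<integral>\<omega>. indicator A \<omega> \<partial>M)"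
    if A: "A \<in> sets M" for A
    using flow_lip_test[OF P fl hg gb, of "indicator A" s] A by (simp add: indicator_def)
  have 1: "AE \<omega> in M. f (\<tau> s \<omega>) - f \<omega> \<le> K * \<bar>s\<bar>"
  proof (rule AE_le_from_sets[OF finite_measure iX])
    fix A assume "A \<in> sets M"
    from T[OF this] show "(\<integral>\<omega>. (f (\<tau> s \<omega>) - f \<omega>) * indicator A \<omega> \<partial>M) \<le> K * \<bar>s\<bar> * (\<integral>\<omega>. indicator A \<omega> \<partial>M)"
      by linarith
  qed
  have 2: "AE \<omega> in M. - (f (\<tau> s \<omega>) - f \<omega>) \<le> K * \<bar>s\<bar>"
  proof (rule AE_le_from_sets[OF finite_measure integrable_minus[OF iX]])
    fix A assume "A \<in> sets M"
    from T[OF this] show "(\<integral>\<omega>. - (f (\<tau> s \<omega>) - f \<omega>) * indicator A \<omega> \<partial>M) \<le> K * \<bar>s\<bar> * (\<integral>\<omega>. indicator A \<omega> \<partial>M)"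
      by (simp only: mult_minus_left integral_minus)
  qed
  from 1 2 show ?thesis by eventually_elim linarith
qed




lemma is_Dpow_L2f: "is_Dpow M \<tau> j f g \<Longrightarrow> L2 M f"
  by (induction j arbitrary: g) auto

lemma pointwise_z:
  assumes P: "prob_space M" and fl: "ergodic_flow M \<tau>"
    and dcz: "is_Dpow M \<tau> k (\<lambda>\<omega>. c \<omega> z) (\<lambda>\<omega>. dc \<omega> z)"
    and dcmz: "is_Dpow M \<tau> k (\<lambda>\<omega>. c \<omega> (-z)) (\<lambda>\<omega>. dc \<omega> (-z))"
    and csm: "\<forall>j. \<exists>h. is_Dpow M \<tau> j (\<lambda>\<omega>. c \<omega> z) h \<and> (AE \<omega> in M. \<bar>h \<omega>\<bar> \<le> Ck j)"
    and csym: "AE \<omega> in M. c (\<tau> z \<omega>) (- z) = c \<omega> z"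
  shows "AE \<omega> in M. \<bar>dc \<omega> z\<bar> \<le> Ck k \<and> \<bar>dc \<omega> (-z) - dc \<omega> z\<bar> \<le> Ck (Suc k) * \<bar>z\<bar>"
proof -
  note [measurable] = flow_meas[OF fl]
  have mz[measurable]: "(\<lambda>\<omega>. c \<omega> z) \<in> borel_measurable M" using is_Dpow_L2f[OF dcz] by (rule L2_meas)
  have mmz[measurable]: "(\<lambda>\<omega>. c \<omega> (-z)) \<in> borel_measurable M" using is_Dpow_L2f[OF dcmz] by (rule L2_meas)
  obtain h0 where h0: "is_Dpow M \<tau> k (\<lambda>\<omega>. c \<omega> z) h0" "AE \<omega> in M. \<bar>h0 \<omega>\<bar> \<le> Ck k" using csm by blast
  have a: "AE \<omega> in M. dc \<omega> z = h0 \<omega>" by (rule is_Dpow_unique[OF fl dcz h0(1)]) simp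
  obtain h1 where h1: "is_Dpow M \<tau> (Suc k) (\<lambda>\<omega>. c \<omega> z) h1" "AE \<omega> in M. \<bar>h1 \<omega>\<bar> \<le> Ck (Suc k)"
    using csm by blast
  then obtain hk where hk: "is_Dpow M \<tau> k (\<lambda>\<omega>. c \<omega> z) hk" "has_gen M \<tau> hk h1" by auto
  have b1: "AE \<omega> in M. dc \<omega> z = hk \<omega>" by (rule is_Dpow_unique[OF fl dcz hk(1)]) simp
  have lip: "AE \<omega> in M. \<bar>hk (\<tau> (-z) \<omega>) - hk \<omega>\<bar> \<le> Ck (Suc k) * \<bar>-z\<bar>"
    by (rule flow_lip[OF P fl hk(2) h1(2)])
  have fl2: "is_Dpow M \<tau> k (\<lambda>\<omega>. c (\<tau> (-z) \<omega>) z) (\<lambda>\<omega>. hk (\<tau> (-z) \<omega>))"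
    by (rule is_Dpow_flow[OF fl hk(1)])
  have cs2: "AE \<omega> in M. c (\<tau> z (\<tau> (-z) \<omega>)) (- z) = c (\<tau> (-z) \<omega>) z"
    by (rule flow_AE[OF fl csym]) measurable
  have cs3: "AE \<omega> in M. c \<omega> (- z) = c (\<tau> (-z) \<omega>) z"
    using cs2 by (rule AE_mp) (rule AE_I2, simp add: flow_add[OF fl, symmetric] flow_zero[OF fl])
  have b2: "AE \<omega> in M. dc \<omega> (-z) = hk (\<tau> (-z) \<omega>)" by (rule is_Dpow_unique[OF fl dcmz fl2 cs3])
  from a h0(2) b1 b2 lip show ?thesis by eventually_elim auto
qed




lemma levy_sets: "sym_levy_measure \<nu> \<Longrightarrow> sets \<nu> = sets borel"
  by (simp add: sym_levy_measure_def)

lemma levy_space: "sym_levy_measure \<nu> \<Longrightarrow> space \<nu> = UNIV"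
  using sets_eq_imp_space_eq[OF levy_sets] by simp

lemma levy_meas: "sym_levy_measure \<nu> \<Longrightarrow> borel_measurable \<nu> = borel_measurable borel"
  by (rule measurable_cong_sets[OF levy_sets refl])

lemma levy_distr: "sym_levy_measure \<nu> \<Longrightarrow> distr \<nu> borel uminus = \<nu>"
  by (simp add: sym_levy_measure_def)

lemma levy_uminus_meas: "sym_levy_measure \<nu> \<Longrightarrow> uminus \<in> measurable \<nu> borel"
  by (subst levy_meas) auto

lemma levy_integral_sym:
  fixes f :: "real \<Rightarrow> real"
  assumes L: "sym_levy_measure \<nu>" and f: "f \<in> borel_measurable borel"
  shows "(\<integral>z. f z \<partial>\<nu>) = (\<integral>z. f (- z) \<partial>\<nu>)"
proof -
  have "(\<integral>z. f z \<partial>\<nu>) = (\<integral>z. f z \<partial>distr \<nu> borel uminus)" by (simp add: levy_distr[OF L])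
  also have "\<dots> = (\<integral>z. f (- z) \<partial>\<nu>)" by (rule integral_distr[OF levy_uminus_meas[OF L] f])
  finally show ?thesis .
qed

lemma levy_integrable_sym:
  fixes f :: "real \<Rightarrow> real"
  assumes L: "sym_levy_measure \<nu>" and f: "integrable \<nu> f"
  shows "integrable \<nu> (\<lambda>z. f (- z))"
proof -
  have fm: "f \<in> borel_measurable borel" using borel_measurable_integrable[OF f] unfolding levy_meas[OF L] .
  have "integrable (distr \<nu> borel uminus) f" using f by (simp add: levy_distr[OF L])
  then show ?thesis using integrable_distr_eq[OF levy_uminus_meas[OF L] fm] by simp
qed

lemma levy_AE_sym:
  assumes L: "sym_levy_measure \<nu>" and P: "AE z in \<nu>. P z"
  shows "AE z in \<nu>. P (- z)"
proof -
  from P obtain N where N: "{z \<in> space \<nu>. \<not> P z} \<subseteq> N" "N \<in> null_sets \<nu>" by (auto elim!: AE_E)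
  have "N \<in> null_sets (distr \<nu> borel uminus)" using N(2) by (simp add: levy_distr[OF L])
  then have N2: "uminus -` N \<inter> space \<nu> \<in> null_sets \<nu>"
    using null_sets_distr_iff[OF levy_uminus_meas[OF L]] by blast
  show ?thesis
  proof (rule AE_I'[OF N2])
    show "{z \<in> space \<nu>. \<not> P (- z)} \<subseteq> uminus -` N \<inter> space \<nu>" using N(1) by (auto simp: levy_space[OF L])
  qed
qed

lemma levy_min_integrable:
  assumes L: "sym_levy_measure \<nu>"
  shows "integrable \<nu> (\<lambda>z. min 1 (z\<^sup>2))"
proof (rule integrableI_nonneg)
  show "(\<lambda>z. min 1 (z\<^sup>2)) \<in> borel_measurable \<nu>" unfolding levy_meas[OF L] by simp
  show "(\<integral>\<^sup>+ z. ennreal (min 1 (z\<^sup>2)) \<partial>\<nu>) < \<infinity>" using L by (simp add: sym_levy_measure_def)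
qed simp

lemma levy_sigma_finite:
  assumes L: "sym_levy_measure \<nu>"
  shows "sigma_finite_measure \<nu>"
proof
  define A where "A = insert {0} (range (\<lambda>n::nat. {z::real. 1 / Suc n \<le> \<bar>z\<bar>}))"
  have fin: "emeasure \<nu> {z::real. 1 / Suc n \<le> \<bar>z\<bar>} \<noteq> \<infinity>" for n
  proof -
    have S: "{z::real. 1 / Suc n \<le> \<bar>z\<bar>} \<in> sets \<nu>" using levy_sets[OF L] by simp
    have "emeasure \<nu> {z::real. 1 / Suc n \<le> \<bar>z\<bar>} = (\<integral>\<^sup>+ z. indicator {z::real. 1 / Suc n \<le> \<bar>z\<bar>} z \<partial>\<nu>)"
      using S by simp
    also have "\<dots> \<le> (\<integral>\<^sup>+ z. ennreal ((real (Suc n))\<^sup>2) * ennreal (min 1 (z\<^sup>2)) \<partial>\<nu>)"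
    proof (rule nn_integral_mono)
      fix z :: real
      have "indicator {z::real. 1 / Suc n \<le> \<bar>z\<bar>} z \<le> (real (Suc n))\<^sup>2 * min 1 (z\<^sup>2)"
      proof (cases "1 / Suc n \<le> \<bar>z\<bar>")
        case True
        then have "1 \<le> real (Suc n) * \<bar>z\<bar>" by (simp add: field_simps)
        then have "1 \<le> (real (Suc n) * \<bar>z\<bar>)\<^sup>2" by (simp add: one_le_power)
        moreover have "1 \<le> (real (Suc n))\<^sup>2" by (simp add: one_le_power)
        ultimately show ?thesis using True unfolding power_mult_distrib by (auto simp: min_def)
      qed simp
      then have "ennreal (indicator {z::real. 1 / Suc n \<le> \<bar>z\<bar>} z) \<le> ennreal ((real (Suc n))\<^sup>2 * min 1 (z\<^sup>2))"
        by (rule ennreal_leI)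
      moreover have "ennreal ((real (Suc n))\<^sup>2 * min 1 (z\<^sup>2)) = ennreal ((real (Suc n))\<^sup>2) * ennreal (min 1 (z\<^sup>2))"
        by (rule ennreal_mult') simp
      ultimately show "indicator {z::real. 1 / Suc n \<le> \<bar>z\<bar>} z \<le> ennreal ((real (Suc n))\<^sup>2) * ennreal (min 1 (z\<^sup>2))"
        by (simp only: ennreal_indicator)
    qed
    also have "\<dots> = ennreal ((real (Suc n))\<^sup>2) * (\<integral>\<^sup>+ z. ennreal (min 1 (z\<^sup>2)) \<partial>\<nu>)"
      by (rule nn_integral_cmult; unfold levy_meas[OF L]; simp)
    also have "\<dots> < \<infinity>" using L by (simp add: sym_levy_measure_def ennreal_mult_less_top)
    finally show ?thesis by simp
  qed
  show "\<exists>A. countable A \<and> A \<subseteq> sets \<nu> \<and> \<Union> A = space \<nu> \<and> (\<forall>a\<in>A. emeasure \<nu> a \<noteq> \<infinity>)"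
  proof (intro exI[of _ A] conjI)
    show "countable A" unfolding A_def by blast
    have "{z::real. 1 / Suc n \<le> \<bar>z\<bar>} \<in> sets borel" for n by measurable
    then show "A \<subseteq> sets \<nu>" unfolding A_def levy_sets[OF L] by auto
    show "\<Union> A = space \<nu>"
    proof -
      have "z \<in> \<Union> A" for z :: real
      proof (cases "z = 0")
        case False
        then have "0 < \<bar>z\<bar>" by simp
        then obtain n where "inverse (real (Suc n)) < \<bar>z\<bar>" using reals_Archimedean by blast
        then have "z \<in> {z::real. 1 / Suc n \<le> \<bar>z\<bar>}" by (simp add: inverse_eq_divide)
        moreover have "{z::real. 1 / Suc n \<le> \<bar>z\<bar>} \<in> A" unfolding A_def by blast
        ultimately show ?thesis by blast
      qed (simp add: A_def)
      then show ?thesis by (auto simp: levy_space[OF L])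
    qed
    have z: "emeasure \<nu> {0} = 0" using L unfolding sym_levy_measure_def by blast
    show "\<forall>a\<in>A. emeasure \<nu> a \<noteq> \<infinity>" unfolding A_def using fin z by auto
  qed
qed




lemma levy_m_tendsto:
  assumes L: "sym_levy_measure \<nu>"
  shows "((\<lambda>a. \<integral>z. indicator {z. \<bar>z\<bar> \<le> a} z * z\<^sup>2 \<partial>\<nu>) \<longlongrightarrow> 0) (at_right 0)"
proof -
  have "((\<lambda>t. \<integral>z. indicator {z. \<bar>z\<bar> \<le> inverse t} z * z\<^sup>2 \<partial>\<nu>) \<longlongrightarrow> (\<integral>z. 0 \<partial>\<nu>)) at_top"
  proof (rule integral_dominated_convergence_at_top[where w="\<lambda>z. min 1 (z\<^sup>2)"])
    show "(\<lambda>z. 0::real) \<in> borel_measurable \<nu>" by simp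
    show "(\<lambda>z. indicator {z. \<bar>z\<bar> \<le> inverse t} z * z\<^sup>2) \<in> borel_measurable \<nu>" for t
      unfolding levy_meas[OF L] by measurable
    show "integrable \<nu> (\<lambda>z. min 1 (z\<^sup>2))" by (rule levy_min_integrable[OF L])
    show "AE z in \<nu>. ((\<lambda>t. indicator {z. \<bar>z\<bar> \<le> inverse t} z * z\<^sup>2) \<longlongrightarrow> 0) at_top"
    proof (rule AE_I2)
      fix z :: real
      show "((\<lambda>t. indicator {z. \<bar>z\<bar> \<le> inverse t} z * z\<^sup>2) \<longlongrightarrow> 0) at_top"
      proof (cases "z = 0")
        case True then show ?thesis by simp
      next
        case False
        have "\<forall>\<^sub>F t in at_top. inverse \<bar>z\<bar> < t" by (rule eventually_gt_at_top)
        then have "\<forall>\<^sub>F t in at_top. indicator {z. \<bar>z\<bar> \<le> inverse t} z * z\<^sup>2 = (0::real)"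
        proof eventually_elim
          case (elim t)
          have "0 < \<bar>z\<bar>" using False by simp
          then have "inverse t < \<bar>z\<bar>" using elim
            by (metis inverse_inverse_eq inverse_less_iff_less inverse_positive_iff_positive order.strict_trans)
          then show ?case by (simp add: indicator_def)
        qed
        then show ?thesis by (rule tendsto_eventually)
      qed
    qed
    have "\<forall>\<^sub>F t in at_top. (1::real) \<le> t" by (rule eventually_ge_at_top)
    then show "\<forall>\<^sub>F t in at_top. AE z in \<nu>. norm (indicator {z. \<bar>z\<bar> \<le> inverse t} z * z\<^sup>2) \<le> min 1 (z\<^sup>2)"
    proof eventually_elim
      case (elim t)
      show ?case
      proof (rule AE_I2)
        fix z :: real
        show "norm (indicator {z. \<bar>z\<bar> \<le> inverse t} z * z\<^sup>2) \<le> min 1 (z\<^sup>2)"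
        proof (cases "\<bar>z\<bar> \<le> inverse t")
          case True
          have "inverse t \<le> 1" using elim by (simp add: inverse_le_1_iff)
          then have "\<bar>z\<bar> \<le> 1" using True by simp
          then have "z\<^sup>2 \<le> 1" by (simp add: abs_le_square_iff[symmetric] power2_abs abs_square_le_1)
          then show ?thesis using True by (simp add: indicator_def)
        qed (simp add: indicator_def)
      qed
    qed
  qed
  then have "((\<lambda>t. \<integral>z. indicator {z. \<bar>z\<bar> \<le> inverse t} z * z\<^sup>2 \<partial>\<nu>) \<longlongrightarrow> 0) at_top" by simp
  then show ?thesis unfolding at_right_to_top filterlim_filtermap .
qed




locale fixom =
  fixes \<nu> :: "real measure" and G Dz :: "real \<Rightarrow> real" and Cw K0 K1 :: real
  assumes L: "sym_levy_measure \<nu>"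
    and Gm[measurable]: "G \<in> borel_measurable borel" and Dm[measurable]: "Dz \<in> borel_measurable borel"
    and Gb: "\<And>z. \<bar>z\<bar> \<le> 1 \<Longrightarrow> \<bar>G z\<bar> \<le> Cw * \<bar>z\<bar>"
    and Gs: "\<And>z. \<bar>z\<bar> \<le> 1 \<Longrightarrow> \<bar>G z + G (- z)\<bar> \<le> Cw * z\<^sup>2"
    and Dg: "AE z in \<nu>. \<bar>Dz z\<bar> \<le> K0 \<and> \<bar>Dz (- z) - Dz z\<bar> \<le> K1 * \<bar>z\<bar>"
begin

definition "S z = (G z * Dz z + G (- z) * Dz (- z)) / 2"
definition "KK = \<bar>K0\<bar> + \<bar>K1\<bar>"

lemma meas_nu: "borel_measurable \<nu> = borel_measurable borel" by (rule levy_meas[OF L])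

lemma S_meas[measurable]: "S \<in> borel_measurable borel" unfolding S_def by measurable

lemma Cw_nonneg: "0 \<le> Cw" using Gb[of 1] by simp

lemma S_bound: "AE z in \<nu>. \<bar>z\<bar> \<le> 1 \<longrightarrow> \<bar>S z\<bar> \<le> Cw * KK * z\<^sup>2"
  using Dg
proof eventually_elim
  case (elim z)
  show ?case
  proof
    assume z: "\<bar>z\<bar> \<le> 1"
    have e: "G z * Dz z + G (- z) * Dz (- z) = (G z + G (- z)) * Dz z + G (- z) * (Dz (- z) - Dz z)"
      by (simp add: algebra_simps)
    have b1: "\<bar>(G z + G (- z)) * Dz z\<bar> \<le> Cw * z\<^sup>2 * \<bar>K0\<bar>"
      unfolding abs_mult by (rule mult_mono) (use Gs[OF z] elim in auto)
    have "\<bar>G (- z)\<bar> \<le> Cw * \<bar>z\<bar>" using Gb[of "-z"] z by simp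
    then have b2: "\<bar>G (- z) * (Dz (- z) - Dz z)\<bar> \<le> (Cw * \<bar>z\<bar>) * (\<bar>K1\<bar> * \<bar>z\<bar>)"
      unfolding abs_mult by (rule mult_mono) (use elim Cw_nonneg in \<open>auto intro: order.trans[OF _ mult_right_mono[of K1 "\<bar>K1\<bar>"]]\<close>)
    have "(Cw * \<bar>z\<bar>) * (\<bar>K1\<bar> * \<bar>z\<bar>) = Cw * \<bar>K1\<bar> * z\<^sup>2" by (simp add: power2_eq_square abs_mult_self_eq)
    with b2 have b2': "\<bar>G (- z) * (Dz (- z) - Dz z)\<bar> \<le> Cw * \<bar>K1\<bar> * z\<^sup>2" by simp
    have "\<bar>G z * Dz z + G (- z) * Dz (- z)\<bar> \<le> \<bar>(G z + G (- z)) * Dz z\<bar> + \<bar>G (- z) * (Dz (- z) - Dz z)\<bar>"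
      unfolding e by (rule abs_triangle_ineq)
    also have "\<dots> \<le> Cw * z\<^sup>2 * \<bar>K0\<bar> + Cw * \<bar>K1\<bar> * z\<^sup>2" using b1 b2' by linarith
    also have "\<dots> = Cw * KK * z\<^sup>2" by (simp add: KK_def algebra_simps)
    finally have "\<bar>G z * Dz z + G (- z) * Dz (- z)\<bar> \<le> Cw * KK * z\<^sup>2" .
    moreover have "0 \<le> Cw * KK * z\<^sup>2" using Cw_nonneg by (simp add: KK_def)
    ultimately show "\<bar>S z\<bar> \<le> Cw * KK * z\<^sup>2" unfolding S_def by simp
  qed
qed

lemma intS:
  assumes B: "B \<in> sets borel" "B \<subseteq> {z. \<bar>z\<bar> \<le> 1}"
  shows "integrable \<nu> (\<lambda>z. indicator B z * S z)"
proof (rule Bochner_Integration.integrable_bound)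
  show "integrable \<nu> (\<lambda>z. Cw * KK * min 1 (z\<^sup>2))" using levy_min_integrable[OF L] by simp
  show "(\<lambda>z. indicator B z * S z) \<in> borel_measurable \<nu>" unfolding meas_nu using B(1) by measurable
  show "AE z in \<nu>. norm (indicator B z * S z) \<le> norm (Cw * KK * min 1 (z\<^sup>2))"
    using S_bound
  proof eventually_elim
    case (elim z)
    have nn: "0 \<le> Cw * KK * min 1 (z\<^sup>2)" using Cw_nonneg by (simp add: KK_def)
    show ?case
    proof (cases "z \<in> B")
      case True
      then have z: "\<bar>z\<bar> \<le> 1" using B(2) by auto
      then have "z\<^sup>2 \<le> 1" by (simp add: abs_square_le_1)
      then show ?thesis using True elim z nn by (simp add: min_def)
    qed (use nn in simp)
  qed
qed

lemma int_sq:
  assumes "a \<le> 1"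
  shows "integrable \<nu> (\<lambda>z. indicator {z. \<bar>z\<bar> \<le> a} z * z\<^sup>2)"
proof (rule Bochner_Integration.integrable_bound)
  show "integrable \<nu> (\<lambda>z. min 1 (z\<^sup>2))" using levy_min_integrable[OF L] by simp
  show "(\<lambda>z. indicator {z. \<bar>z\<bar> \<le> a} z * z\<^sup>2) \<in> borel_measurable \<nu>" unfolding meas_nu by measurable
  show "AE z in \<nu>. norm (indicator {z. \<bar>z\<bar> \<le> a} z * z\<^sup>2) \<le> norm (min 1 (z\<^sup>2))"
  proof (rule AE_I2)
    fix z :: real
    show "norm (indicator {z. \<bar>z\<bar> \<le> a} z * z\<^sup>2) \<le> norm (min 1 (z\<^sup>2))"
    proof (cases "\<bar>z\<bar> \<le> a")
      case True
      then have "z\<^sup>2 \<le> 1" using assms by (simp add: abs_square_le_1)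
      then show ?thesis using True by (simp add: min_def)
    qed simp
  qed
qed

lemma bound_iii:
  assumes "a \<le> 1"
  shows "\<bar>\<integral>z. indicator {z. \<bar>z\<bar> \<le> a} z * S z \<partial>\<nu>\<bar> \<le> Cw * KK * (\<integral>z. indicator {z. \<bar>z\<bar> \<le> a} z * z\<^sup>2 \<partial>\<nu>)"
proof -
  have i1: "integrable \<nu> (\<lambda>z. indicator {z. \<bar>z\<bar> \<le> a} z * S z)"
    by (rule intS) (use assms in auto)
  have "\<bar>\<integral>z. indicator {z. \<bar>z\<bar> \<le> a} z * S z \<partial>\<nu>\<bar> \<le> (\<integral>z. \<bar>indicator {z. \<bar>z\<bar> \<le> a} z * S z\<bar> \<partial>\<nu>)"
    by simp
  also have "\<dots> \<le> (\<integral>z. Cw * KK * (indicator {z. \<bar>z\<bar> \<le> a} z * z\<^sup>2) \<partial>\<nu>)"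
  proof (rule integral_mono_AE)
    show "integrable \<nu> (\<lambda>z. \<bar>indicator {z. \<bar>z\<bar> \<le> a} z * S z\<bar>)" using i1 by simp
    show "integrable \<nu> (\<lambda>z. Cw * KK * (indicator {z. \<bar>z\<bar> \<le> a} z * z\<^sup>2))" using int_sq[OF assms] by simp
    show "AE z in \<nu>. \<bar>indicator {z. \<bar>z\<bar> \<le> a} z * S z\<bar> \<le> Cw * KK * (indicator {z. \<bar>z\<bar> \<le> a} z * z\<^sup>2)"
      using S_bound
    proof eventually_elim
      case (elim z)
      show ?case
      proof (cases "\<bar>z\<bar> \<le> a")
        case True
        then show ?thesis using elim assms by (simp add: indicator_def)
      qed (simp add: indicator_def)
    qed
  qed
  also have "\<dots> = Cw * KK * (\<integral>z. indicator {z. \<bar>z\<bar> \<le> a} z * z\<^sup>2 \<partial>\<nu>)" by simp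
  finally show ?thesis .
qed

lemma split_ii:
  assumes "0 < \<alpha>" "\<alpha> \<le> 1"
  shows "(\<integral>z. indicator {z. \<bar>z\<bar> \<le> 1} z * S z \<partial>\<nu>) - (\<integral>z. indicator {z. \<alpha> < \<bar>z\<bar> \<and> \<bar>z\<bar> \<le> 1} z * S z \<partial>\<nu>)
    = (\<integral>z. indicator {z. \<bar>z\<bar> \<le> \<alpha>} z * S z \<partial>\<nu>)"
proof -
  have i1: "integrable \<nu> (\<lambda>z. indicator {z. \<bar>z\<bar> \<le> 1} z * S z)" by (rule intS) auto
  have i2: "integrable \<nu> (\<lambda>z. indicator {z. \<alpha> < \<bar>z\<bar> \<and> \<bar>z\<bar> \<le> 1} z * S z)" by (rule intS) auto
  have "(\<integral>z. indicator {z. \<bar>z\<bar> \<le> 1} z * S z \<partial>\<nu>) - (\<integral>z. indicator {z. \<alpha> < \<bar>z\<bar> \<and> \<bar>z\<bar> \<le> 1} z * S z \<partial>\<nu>)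
     = (\<integral>z. indicator {z. \<bar>z\<bar> \<le> 1} z * S z - indicator {z. \<alpha> < \<bar>z\<bar> \<and> \<bar>z\<bar> \<le> 1} z * S z \<partial>\<nu>)"
    using i1 i2 by simp
  also have "\<dots> = (\<integral>z. indicator {z. \<bar>z\<bar> \<le> \<alpha>} z * S z \<partial>\<nu>)"
    by (rule Bochner_Integration.integral_cong) (use assms in \<open>auto simp: indicator_def\<close>)
  finally show ?thesis .
qed

lemma sym_i:
  assumes "0 < \<alpha>"
  shows "(LINT z:{z. \<alpha> < \<bar>z\<bar> \<and> \<bar>z\<bar> \<le> 1}|\<nu>. G z * Dz z) = (\<integral>z. indicator {z. \<alpha> < \<bar>z\<bar> \<and> \<bar>z\<bar> \<le> 1} z * S z \<partial>\<nu>)"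
proof -
  define A where "A = {z::real. \<alpha> < \<bar>z\<bar> \<and> \<bar>z\<bar> \<le> 1}"
  define u where "u z = indicator A z * (G z * Dz z)" for z
  have Am[measurable]: "A \<in> sets borel" unfolding A_def by measurable
  have um[measurable]: "u \<in> borel_measurable borel" unfolding u_def by measurable
  have Asym: "indicator A (- z) = (indicator A z :: real)" for z unfolding A_def by (simp add: indicator_def)
  have iu: "integrable \<nu> u"
  proof (rule Bochner_Integration.integrable_bound)
    show "integrable \<nu> (\<lambda>z. Cw * \<bar>K0\<bar> / \<alpha> * min 1 (z\<^sup>2))" using levy_min_integrable[OF L] by simp
    show "u \<in> borel_measurable \<nu>" unfolding meas_nu by (rule um)
    show "AE z in \<nu>. norm (u z) \<le> norm (Cw * \<bar>K0\<bar> / \<alpha> * min 1 (z\<^sup>2))"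
      using Dg
    proof eventually_elim
      case (elim z)
      have nn: "0 \<le> Cw * \<bar>K0\<bar> / \<alpha> * min 1 (z\<^sup>2)" using Cw_nonneg assms by simp
      show ?case
      proof (cases "z \<in> A")
        case True
        then have z: "\<alpha> < \<bar>z\<bar>" "\<bar>z\<bar> \<le> 1" unfolding A_def by auto
        have z2: "z\<^sup>2 \<le> 1" using z(2) abs_square_le_1 by blast
        have m: "min 1 (z\<^sup>2) = z\<^sup>2" using z2 by (rule min_absorb2)
        have "\<bar>G z * Dz z\<bar> \<le> (Cw * \<bar>z\<bar>) * \<bar>K0\<bar>"
          unfolding abs_mult by (rule mult_mono) (use Gb[OF z(2)] elim Cw_nonneg in auto)
        also have "\<dots> \<le> Cw * \<bar>K0\<bar> / \<alpha> * z\<^sup>2"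
        proof -
          have "\<alpha> * \<bar>z\<bar> \<le> \<bar>z\<bar> * \<bar>z\<bar>" using z by (intro mult_right_mono) auto
          also have "\<bar>z\<bar> * \<bar>z\<bar> = z\<^sup>2" by (simp add: power2_eq_square)
          finally have "\<alpha> * \<bar>z\<bar> \<le> z\<^sup>2" .
          then have "\<bar>z\<bar> \<le> z\<^sup>2 / \<alpha>" using assms by (simp add: field_simps)
          then have "Cw * \<bar>K0\<bar> * \<bar>z\<bar> \<le> Cw * \<bar>K0\<bar> * (z\<^sup>2 / \<alpha>)"
            by (rule mult_left_mono) (use Cw_nonneg in simp)
          then show ?thesis by (simp add: mult_ac)
        qed
        finally have "\<bar>G z * Dz z\<bar> \<le> Cw * \<bar>K0\<bar> / \<alpha> * min 1 (z\<^sup>2)" using m by simp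
        then show ?thesis using True nn unfolding u_def by (simp only: real_norm_def abs_of_nonneg[OF nn]) simp
      qed (use nn in \<open>simp add: u_def\<close>)
    qed
  qed
  have iu2: "integrable \<nu> (\<lambda>z. u (- z))" by (rule levy_integrable_sym[OF L iu])
  have "(LINT z:A|\<nu>. G z * Dz z) = (\<integral>z. u z \<partial>\<nu>)"
    unfolding set_lebesgue_integral_def u_def by simp
  also have "\<dots> = ((\<integral>z. u z \<partial>\<nu>) + (\<integral>z. u (- z) \<partial>\<nu>)) / 2"
    using levy_integral_sym[OF L um] by simp
  also have "\<dots> = (\<integral>z. (u z + u (- z)) / 2 \<partial>\<nu>)"
    using iu iu2 by simp
  also have "\<dots> = (\<integral>z. indicator A z * S z \<partial>\<nu>)"
    by (rule Bochner_Integration.integral_cong) (simp_all add: u_def S_def Asym algebra_simps)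
  finally show ?thesis unfolding A_def .
qed

end




lemma ev01: "\<forall>\<^sub>F \<alpha> in at_right (0::real). 0 < \<alpha> \<and> \<alpha> \<le> 1"
  unfolding eventually_at_right_field by (rule exI[of _ 1]) auto

lemma good_AE:
  fixes M :: "'a measure" and \<tau> :: "real \<Rightarrow> 'a \<Rightarrow> 'a" and \<nu> :: "real measure"
    and c :: "'a \<Rightarrow> real \<Rightarrow> real" and Ck :: "nat \<Rightarrow> real" and k :: nat
    and dc :: "'a \<Rightarrow> real \<Rightarrow> real"
  assumes P: "prob_space M"
    and fl: "ergodic_flow M \<tau>"
    and L: "sym_levy_measure \<nu>"
    and c_sym: "AE z in \<nu>. AE \<omega> in M. c (\<tau> z \<omega>) (- z) = c \<omega> z"
    and c_smooth: "AE z in \<nu>. \<forall>j. \<exists>h. is_Dpow M \<tau> j (\<lambda>\<omega>. c \<omega> z) h \<and>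
                      (AE \<omega> in M. \<bar>h \<omega>\<bar> \<le> Ck j)"
    and dc_meas: "(\<lambda>(\<omega>, z). dc \<omega> z) \<in> borel_measurable (M \<Otimes>\<^sub>M \<nu>)"
    and dc_version: "AE z in \<nu>. is_Dpow M \<tau> k (\<lambda>\<omega>. c \<omega> z) (\<lambda>\<omega>. dc \<omega> z)"
  shows "AE \<omega> in M. AE z in \<nu>. \<bar>dc \<omega> z\<bar> \<le> Ck k \<and> \<bar>dc \<omega> (- z) - dc \<omega> z\<bar> \<le> Ck (Suc k) * \<bar>z\<bar>"
proof -
  interpret prob_space M by fact
  interpret N: sigma_finite_measure \<nu> by (rule levy_sigma_finite[OF L])
  interpret pair_sigma_finite M \<nu> ..
  have dcm: "is_Dpow M \<tau> k (\<lambda>\<omega>. c \<omega> (- z)) (\<lambda>\<omega>. dc \<omega> (- z))" if "is_Dpow M \<tau> k (\<lambda>\<omega>. c \<omega> (- z)) (\<lambda>\<omega>. dc \<omega> (- z))" for z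
    using that .
  have A1: "AE z in \<nu>. AE \<omega> in M. \<bar>dc \<omega> z\<bar> \<le> Ck k \<and> \<bar>dc \<omega> (- z) - dc \<omega> z\<bar> \<le> Ck (Suc k) * \<bar>z\<bar>"
    using dc_version levy_AE_sym[OF L dc_version] c_smooth c_sym
  proof eventually_elim
    case (elim z)
    then show ?case by (intro pointwise_z[OF P fl]) simp_all
  qed
  have um: "(\<lambda>x::real. - x) \<in> measurable \<nu> \<nu>"
    using measurable_cong_sets[OF levy_sets[OF L] levy_sets[OF L]] by simp
  have sw: "(\<lambda>p. (fst p, - snd p)) \<in> measurable (M \<Otimes>\<^sub>M \<nu>) (M \<Otimes>\<^sub>M \<nu>)"
    by (intro measurable_Pair measurable_fst measurable_compose[OF measurable_snd um])
  have d1: "(\<lambda>p. dc (fst p) (snd p)) \<in> borel_measurable (M \<Otimes>\<^sub>M \<nu>)"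
    using dc_meas by (simp add: case_prod_beta')
  have d2: "(\<lambda>p. dc (fst p) (- snd p)) \<in> borel_measurable (M \<Otimes>\<^sub>M \<nu>)"
    using measurable_comp[OF sw d1] by (simp add: comp_def)
  have "{x \<in> space (M \<Otimes>\<^sub>M \<nu>). \<bar>dc (fst x) (snd x)\<bar> \<le> Ck k \<and> \<bar>dc (fst x) (- snd x) - dc (fst x) (snd x)\<bar> \<le> Ck (Suc k) * \<bar>snd x\<bar>}
     \<in> sets (M \<Otimes>\<^sub>M \<nu>)"
  proof (intro sets.sets_Collect_conj)
    show "{x \<in> space (M \<Otimes>\<^sub>M \<nu>). \<bar>dc (fst x) (snd x)\<bar> \<le> Ck k} \<in> sets (M \<Otimes>\<^sub>M \<nu>)"
      by (rule borel_measurable_le) (use d1 in measurable)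
    have s: "(\<lambda>x. Ck (Suc k) * \<bar>snd x\<bar>) \<in> borel_measurable (M \<Otimes>\<^sub>M \<nu>)"
    proof -
      have "(\<lambda>z::real. Ck (Suc k) * \<bar>z\<bar>) \<in> borel_measurable \<nu>" unfolding levy_meas[OF L] by measurable
      from measurable_compose[OF measurable_snd this] show ?thesis .
    qed
    show "{x \<in> space (M \<Otimes>\<^sub>M \<nu>). \<bar>dc (fst x) (- snd x) - dc (fst x) (snd x)\<bar> \<le> Ck (Suc k) * \<bar>snd x\<bar>} \<in> sets (M \<Otimes>\<^sub>M \<nu>)"
      by (rule borel_measurable_le) (use d1 d2 s in measurable)
  qed
  from AE_commute[OF this] A1 show ?thesis by simp
qed




theorem mainTheorem15:
  fixes M :: "'a measure" and \<tau> :: "real \<Rightarrow> 'a \<Rightarrow> 'a" and \<nu> :: "real measure"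
    and c :: "'a \<Rightarrow> real \<Rightarrow> real" and Ck :: "nat \<Rightarrow> real" and k :: nat
    and g :: "'a \<Rightarrow> real \<Rightarrow> real" and dc :: "'a \<Rightarrow> real \<Rightarrow> real"
  assumes "prob_space M"
    and "ergodic_flow M \<tau>"
    and "sym_levy_measure \<nu>"
    and c_meas: "(\<lambda>(\<omega>, z). c \<omega> z) \<in> borel_measurable (M \<Otimes>\<^sub>M \<nu>)"
    and c_nonneg: "\<forall>\<omega>\<in>space M. \<forall>z. 0 \<le> c \<omega> z"
    and c_bdd: "\<exists>B. \<forall>\<omega>\<in>space M. \<forall>z. \<bar>c \<omega> z\<bar> \<le> B"
    and c_sym: "AE z in \<nu>. AE \<omega> in M. c (\<tau> z \<omega>) (- z) = c \<omega> z"
    and c_smooth: "AE z in \<nu>. \<forall>j. \<exists>h. is_Dpow M \<tau> j (\<lambda>\<omega>. c \<omega> z) h \<and>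
                      (AE \<omega> in M. \<bar>h \<omega>\<bar> \<le> Ck j)"
    and dc_meas: "(\<lambda>(\<omega>, z). dc \<omega> z) \<in> borel_measurable (M \<Otimes>\<^sub>M \<nu>)"
    and dc_version: "AE z in \<nu>. is_Dpow M \<tau> k (\<lambda>\<omega>. c \<omega> z) (\<lambda>\<omega>. dc \<omega> z)"
    and g_meas: "(\<lambda>(\<omega>, z). g \<omega> z) \<in> borel_measurable (M \<Otimes>\<^sub>M \<nu>)"
  shows
   "(\<forall>C. C \<in> borel_measurable M \<and> integrable M (\<lambda>\<omega>. (C \<omega>)\<^sup>2) \<and>
        (\<forall>\<omega>\<in>space M. \<forall>z. \<bar>z\<bar> \<le> 1 \<longrightarrow> \<bar>g \<omega> z\<bar> \<le> C \<omega> * \<bar>z\<bar>) \<and>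
        (\<forall>\<omega>\<in>space M. \<forall>z. \<bar>z\<bar> \<le> 1 \<longrightarrow> \<bar>g \<omega> z + g \<omega> (- z)\<bar> \<le> C \<omega> * z\<^sup>2)
      \<longrightarrow> (\<exists>F. F \<in> borel_measurable M \<and> integrable M (\<lambda>\<omega>. (F \<omega>)\<^sup>2) \<and>
            ((\<lambda>\<alpha>. \<integral>\<omega>. ((LINT z:{z. \<alpha> < \<bar>z\<bar> \<and> \<bar>z\<bar> \<le> 1}|\<nu>. g \<omega> z * dc \<omega> z) - F \<omega>)\<^sup>2 \<partial>M)
               \<longlongrightarrow> 0) (at_right 0)))
    \<and>
    (\<forall>C. C \<in> borel_measurable M \<and> (\<exists>B. AE \<omega> in M. \<bar>C \<omega>\<bar> \<le> B) \<and>
        (\<forall>\<omega>\<in>space M. \<forall>z. \<bar>z\<bar> \<le> 1 \<longrightarrow> \<bar>g \<omega> z\<bar> \<le> C \<omega> * \<bar>z\<bar>) \<and>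
        (\<forall>\<omega>\<in>space M. \<forall>z. \<bar>z\<bar> \<le> 1 \<longrightarrow> \<bar>g \<omega> z + g \<omega> (- z)\<bar> \<le> C \<omega> * z\<^sup>2)
      \<longrightarrow> (\<exists>F. F \<in> borel_measurable M \<and> (\<exists>B. AE \<omega> in M. \<bar>F \<omega>\<bar> \<le> B) \<and>
            (\<forall>\<epsilon>>0. \<forall>\<^sub>F \<alpha> in at_right 0.
               AE \<omega> in M. \<bar>(LINT z:{z. \<alpha> < \<bar>z\<bar> \<and> \<bar>z\<bar> \<le> 1}|\<nu>. g \<omega> z * dc \<omega> z) - F \<omega>\<bar> \<le> \<epsilon>)))"
proof -
  note P = assms(1) and fl = assms(2) and L = assms(3)
  interpret prob_space M by (rule P)
  interpret N: sigma_finite_measure \<nu> by (rule levy_sigma_finite[OF L])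
  interpret pair_sigma_finite M \<nu> ..
  define K0 where "K0 = Ck k"
  define K1 where "K1 = Ck (Suc k)"
  define KK where "KK = \<bar>K0\<bar> + \<bar>K1\<bar>"
  define S where "S \<omega> z = (g \<omega> z * dc \<omega> z + g \<omega> (- z) * dc \<omega> (- z)) / 2" for \<omega> z
  define Fn where "Fn \<omega> = (\<integral>z. indicator {z. \<bar>z\<bar> \<le> 1} z * S \<omega> z \<partial>\<nu>)" for \<omega>
  define I where "I \<alpha> \<omega> = (LINT z:{z. \<alpha> < \<bar>z\<bar> \<and> \<bar>z\<bar> \<le> 1}|\<nu>. g \<omega> z * dc \<omega> z)" for \<alpha> \<omega>
  define m where "m a = (\<integral>z. indicator {z. \<bar>z\<bar> \<le> a} z * z\<^sup>2 \<partial>\<nu>)" for a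
  have good: "AE \<omega> in M. AE z in \<nu>. \<bar>dc \<omega> z\<bar> \<le> K0 \<and> \<bar>dc \<omega> (- z) - dc \<omega> z\<bar> \<le> K1 * \<bar>z\<bar>"
    unfolding K0_def K1_def by (rule good_AE[OF P fl L c_sym c_smooth dc_meas dc_version])
  have um: "(\<lambda>x::real. - x) \<in> measurable \<nu> \<nu>"
    using measurable_cong_sets[OF levy_sets[OF L] levy_sets[OF L]] by simp
  have sw: "(\<lambda>p. (fst p, - snd p)) \<in> measurable (M \<Otimes>\<^sub>M \<nu>) (M \<Otimes>\<^sub>M \<nu>)"
    by (intro measurable_Pair measurable_fst measurable_compose[OF measurable_snd um])
  have d1: "(\<lambda>p. dc (fst p) (snd p)) \<in> borel_measurable (M \<Otimes>\<^sub>M \<nu>)"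
    using dc_meas by (simp add: case_prod_beta')
  have d2: "(\<lambda>p. dc (fst p) (- snd p)) \<in> borel_measurable (M \<Otimes>\<^sub>M \<nu>)"
    using measurable_comp[OF sw d1] by (simp add: comp_def)
  have g1: "(\<lambda>p. g (fst p) (snd p)) \<in> borel_measurable (M \<Otimes>\<^sub>M \<nu>)"
    using g_meas by (simp add: case_prod_beta')
  have g2: "(\<lambda>p. g (fst p) (- snd p)) \<in> borel_measurable (M \<Otimes>\<^sub>M \<nu>)"
    using measurable_comp[OF sw g1] by (simp add: comp_def)
  have ind: "(\<lambda>p. indicator A (snd p) :: real) \<in> borel_measurable (M \<Otimes>\<^sub>M \<nu>)" if "A \<in> sets borel" for A
  proof -
    have "(indicator A :: real \<Rightarrow> real) \<in> borel_measurable \<nu>" unfolding levy_meas[OF L] using that by simp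
    from measurable_compose[OF measurable_snd this] show ?thesis .
  qed
  have Fm: "Fn \<in> borel_measurable M"
  proof -
    have "(\<lambda>p. indicator {z. \<bar>z\<bar> \<le> 1} (snd p) * S (fst p) (snd p)) \<in> borel_measurable (M \<Otimes>\<^sub>M \<nu>)"
      unfolding S_def using d1 d2 g1 g2 ind[of "{z. \<bar>z\<bar> \<le> 1}"] by measurable
    then have "case_prod (\<lambda>\<omega> z. indicator {z. \<bar>z\<bar> \<le> 1} z * S \<omega> z) \<in> borel_measurable (M \<Otimes>\<^sub>M \<nu>)"
      by (simp add: case_prod_beta')
    from N.borel_measurable_lebesgue_integral[OF this] show ?thesis unfolding Fn_def .
  qed
  have Im: "I \<alpha> \<in> borel_measurable M" for \<alpha>
  proof -
    have "(\<lambda>p. indicator {z. \<alpha> < \<bar>z\<bar> \<and> \<bar>z\<bar> \<le> 1} (snd p) *\<^sub>R (g (fst p) (snd p) * dc (fst p) (snd p))) \<in> borel_measurable (M \<Otimes>\<^sub>M \<nu>)"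
      using d1 g1 ind[of "{z. \<alpha> < \<bar>z\<bar> \<and> \<bar>z\<bar> \<le> 1}"] by measurable
    then have "case_prod (\<lambda>\<omega> z. indicator {z. \<alpha> < \<bar>z\<bar> \<and> \<bar>z\<bar> \<le> 1} z *\<^sub>R (g \<omega> z * dc \<omega> z)) \<in> borel_measurable (M \<Otimes>\<^sub>M \<nu>)"
      by (simp add: case_prod_beta')
    from N.borel_measurable_lebesgue_integral[OF this] show ?thesis unfolding I_def set_lebesgue_integral_def .
  qed
  have fib: "(\<lambda>z. f (\<omega>, z)) \<in> borel_measurable borel" if "f \<in> borel_measurable (M \<Otimes>\<^sub>M \<nu>)" "\<omega> \<in> space M" for f \<omega>
    using measurable_Pair2[OF that] unfolding levy_meas[OF L] .
  have core: "AE \<omega> in M. (\<forall>\<alpha>. 0 < \<alpha> \<and> \<alpha> \<le> 1 \<longrightarrow> \<bar>I \<alpha> \<omega> - Fn \<omega>\<bar> \<le> C \<omega> * KK * m \<alpha>)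
      \<and> \<bar>Fn \<omega>\<bar> \<le> C \<omega> * KK * m 1 \<and> 0 \<le> C \<omega>"
    if Cb1: "\<forall>\<omega>\<in>space M. \<forall>z. \<bar>z\<bar> \<le> 1 \<longrightarrow> \<bar>g \<omega> z\<bar> \<le> C \<omega> * \<bar>z\<bar>"
    and Cb2: "\<forall>\<omega>\<in>space M. \<forall>z. \<bar>z\<bar> \<le> 1 \<longrightarrow> \<bar>g \<omega> z + g \<omega> (- z)\<bar> \<le> C \<omega> * z\<^sup>2" for C
    using good
  proof (rule AE_mp, intro AE_I2 impI)
    fix \<omega> assume \<omega>: "\<omega> \<in> space M"
      and gd: "AE z in \<nu>. \<bar>dc \<omega> z\<bar> \<le> K0 \<and> \<bar>dc \<omega> (- z) - dc \<omega> z\<bar> \<le> K1 * \<bar>z\<bar>"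
    have fx: "fixom \<nu> (g \<omega>) (dc \<omega>) (C \<omega>) K0 K1"
    proof
      show "sym_levy_measure \<nu>" by (rule L)
      show "g \<omega> \<in> borel_measurable borel" using fib[OF g1 \<omega>] by simp
      show "dc \<omega> \<in> borel_measurable borel" using fib[OF d1 \<omega>] by simp
    qed (use Cb1 Cb2 \<omega> gd in auto)
    interpret fx: fixom \<nu> "g \<omega>" "dc \<omega>" "C \<omega>" K0 K1 by (rule fx)
    have SS: "fx.S = S \<omega>" by (simp add: fun_eq_iff fx.S_def S_def)
    have KK: "fx.KK = KK" by (simp add: fx.KK_def KK_def)
    show "(\<forall>\<alpha>. 0 < \<alpha> \<and> \<alpha> \<le> 1 \<longrightarrow> \<bar>I \<alpha> \<omega> - Fn \<omega>\<bar> \<le> C \<omega> * KK * m \<alpha>)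
      \<and> \<bar>Fn \<omega>\<bar> \<le> C \<omega> * KK * m 1 \<and> 0 \<le> C \<omega>"
    proof (intro conjI allI impI)
      fix \<alpha> :: real assume a: "0 < \<alpha> \<and> \<alpha> \<le> 1"
      have "I \<alpha> \<omega> = (\<integral>z. indicator {z. \<alpha> < \<bar>z\<bar> \<and> \<bar>z\<bar> \<le> 1} z * S \<omega> z \<partial>\<nu>)"
        unfolding I_def using fx.sym_i[of \<alpha>] a SS by simp
      then have "Fn \<omega> - I \<alpha> \<omega> = (\<integral>z. indicator {z. \<bar>z\<bar> \<le> \<alpha>} z * S \<omega> z \<partial>\<nu>)"
        unfolding Fn_def using fx.split_ii[of \<alpha>] a SS by simp
      moreover have "\<bar>\<integral>z. indicator {z. \<bar>z\<bar> \<le> \<alpha>} z * S \<omega> z \<partial>\<nu>\<bar> \<le> C \<omega> * KK * m \<alpha>"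
        using fx.bound_iii[of \<alpha>] a SS KK unfolding m_def by simp
      ultimately show "\<bar>I \<alpha> \<omega> - Fn \<omega>\<bar> \<le> C \<omega> * KK * m \<alpha>" by (simp add: abs_minus_commute)
    next
      show "\<bar>Fn \<omega>\<bar> \<le> C \<omega> * KK * m 1"
        using fx.bound_iii[of 1] SS KK unfolding m_def Fn_def by simp
    next
      show "0 \<le> C \<omega>" by (rule fx.Cw_nonneg)
    qed
  qed
  have m_nn: "0 \<le> m a" for a unfolding m_def by (rule Bochner_Integration.integral_nonneg) (simp add: indicator_def)
  have m_lim: "(m \<longlongrightarrow> 0) (at_right 0)" unfolding m_def by (rule levy_m_tendsto[OF L])
  have KK_nn: "0 \<le> KK" by (simp add: KK_def)
  have sq_le: "x\<^sup>2 \<le> y\<^sup>2" if "\<bar>x\<bar> \<le> y" for x y :: real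
    using power_mono[OF that abs_ge_zero, of 2] by simp
  show ?thesis
  proof (intro conjI allI impI)
    fix C :: "'a \<Rightarrow> real"
    assume H: "C \<in> borel_measurable M \<and> integrable M (\<lambda>\<omega>. (C \<omega>)\<^sup>2) \<and>
        (\<forall>\<omega>\<in>space M. \<forall>z. \<bar>z\<bar> \<le> 1 \<longrightarrow> \<bar>g \<omega> z\<bar> \<le> C \<omega> * \<bar>z\<bar>) \<and>
        (\<forall>\<omega>\<in>space M. \<forall>z. \<bar>z\<bar> \<le> 1 \<longrightarrow> \<bar>g \<omega> z + g \<omega> (- z)\<bar> \<le> C \<omega> * z\<^sup>2)"
    then have Cm: "C \<in> borel_measurable M" and Ci: "integrable M (\<lambda>\<omega>. (C \<omega>)\<^sup>2)" by auto
    have co: "AE \<omega> in M. (\<forall>\<alpha>. 0 < \<alpha> \<and> \<alpha> \<le> 1 \<longrightarrow> \<bar>I \<alpha> \<omega> - Fn \<omega>\<bar> \<le> C \<omega> * KK * m \<alpha>)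
      \<and> \<bar>Fn \<omega>\<bar> \<le> C \<omega> * KK * m 1 \<and> 0 \<le> C \<omega>"
      by (rule core) (use H in auto)
    have F2: "integrable M (\<lambda>\<omega>. (Fn \<omega>)\<^sup>2)"
    proof (rule Bochner_Integration.integrable_bound)
      show "integrable M (\<lambda>\<omega>. (KK * m 1)\<^sup>2 * (C \<omega>)\<^sup>2)" using Ci by simp
      show "(\<lambda>\<omega>. (Fn \<omega>)\<^sup>2) \<in> borel_measurable M" using Fm by measurable
      show "AE \<omega> in M. norm ((Fn \<omega>)\<^sup>2) \<le> norm ((KK * m 1)\<^sup>2 * (C \<omega>)\<^sup>2)"
        using co
      proof eventually_elim
        case (elim \<omega>)
        then have "(Fn \<omega>)\<^sup>2 \<le> (C \<omega> * KK * m 1)\<^sup>2" by (intro sq_le) simp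
        then show ?case by (simp add: power_mult_distrib mult_ac)
      qed
    qed
    have lim: "((\<lambda>\<alpha>. \<integral>\<omega>. (I \<alpha> \<omega> - Fn \<omega>)\<^sup>2 \<partial>M) \<longlongrightarrow> 0) (at_right 0)"
    proof (rule Lim_null_comparison)
      have "((\<lambda>\<alpha>. (KK * m \<alpha>)\<^sup>2 * (\<integral>\<omega>. (C \<omega>)\<^sup>2 \<partial>M)) \<longlongrightarrow> (KK * 0)\<^sup>2 * (\<integral>\<omega>. (C \<omega>)\<^sup>2 \<partial>M)) (at_right 0)"
        by (intro tendsto_intros m_lim)
      then show "((\<lambda>\<alpha>. (KK * m \<alpha>)\<^sup>2 * (\<integral>\<omega>. (C \<omega>)\<^sup>2 \<partial>M)) \<longlongrightarrow> 0) (at_right 0)" by simp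
      show "\<forall>\<^sub>F \<alpha> in at_right 0. norm (\<integral>\<omega>. (I \<alpha> \<omega> - Fn \<omega>)\<^sup>2 \<partial>M) \<le> (KK * m \<alpha>)\<^sup>2 * (\<integral>\<omega>. (C \<omega>)\<^sup>2 \<partial>M)"
        using ev01
      proof eventually_elim
        case (elim \<alpha>)
        note a = elim
        have "(\<integral>\<omega>. (I \<alpha> \<omega> - Fn \<omega>)\<^sup>2 \<partial>M) \<le> (\<integral>\<omega>. (KK * m \<alpha>)\<^sup>2 * (C \<omega>)\<^sup>2 \<partial>M)"
        proof (rule integral_mono_AE')
          show "integrable M (\<lambda>\<omega>. (KK * m \<alpha>)\<^sup>2 * (C \<omega>)\<^sup>2)" using Ci by simp
          show "AE \<omega> in M. (I \<alpha> \<omega> - Fn \<omega>)\<^sup>2 \<le> (KK * m \<alpha>)\<^sup>2 * (C \<omega>)\<^sup>2"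
            using co
          proof eventually_elim
            case (elim \<omega>)
            then have "(I \<alpha> \<omega> - Fn \<omega>)\<^sup>2 \<le> (C \<omega> * KK * m \<alpha>)\<^sup>2" using a by (intro sq_le) simp
            then show ?case by (simp add: power_mult_distrib mult_ac)
          qed
          show "AE \<omega> in M. 0 \<le> (KK * m \<alpha>)\<^sup>2 * (C \<omega>)\<^sup>2" by simp
        qed
        moreover have "0 \<le> (\<integral>\<omega>. (I \<alpha> \<omega> - Fn \<omega>)\<^sup>2 \<partial>M)" by simp
        ultimately show ?case by simp
      qed
    qed
    show "\<exists>F. F \<in> borel_measurable M \<and> integrable M (\<lambda>\<omega>. (F \<omega>)\<^sup>2) \<and>
            ((\<lambda>\<alpha>. \<integral>\<omega>. ((LINT z:{z. \<alpha> < \<bar>z\<bar> \<and> \<bar>z\<bar> \<le> 1}|\<nu>. g \<omega> z * dc \<omega> z) - F \<omega>)\<^sup>2 \<partial>M)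
               \<longlongrightarrow> 0) (at_right 0)"
      using Fm F2 lim unfolding I_def by blast
  next
    fix C :: "'a \<Rightarrow> real"
    assume H: "C \<in> borel_measurable M \<and> (\<exists>B. AE \<omega> in M. \<bar>C \<omega>\<bar> \<le> B) \<and>
        (\<forall>\<omega>\<in>space M. \<forall>z. \<bar>z\<bar> \<le> 1 \<longrightarrow> \<bar>g \<omega> z\<bar> \<le> C \<omega> * \<bar>z\<bar>) \<and>
        (\<forall>\<omega>\<in>space M. \<forall>z. \<bar>z\<bar> \<le> 1 \<longrightarrow> \<bar>g \<omega> z + g \<omega> (- z)\<bar> \<le> C \<omega> * z\<^sup>2)"
    then obtain B where B: "AE \<omega> in M. \<bar>C \<omega>\<bar> \<le> B" by auto
    have co: "AE \<omega> in M. (\<forall>\<alpha>. 0 < \<alpha> \<and> \<alpha> \<le> 1 \<longrightarrow> \<bar>I \<alpha> \<omega> - Fn \<omega>\<bar> \<le> C \<omega> * KK * m \<alpha>)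
      \<and> \<bar>Fn \<omega>\<bar> \<le> C \<omega> * KK * m 1 \<and> 0 \<le> C \<omega>"
      by (rule core) (use H in auto)
    have Cle: "C \<omega> * KK * m a \<le> \<bar>B\<bar> * KK * m a" if "\<bar>C \<omega>\<bar> \<le> B" for \<omega> a
    proof -
      have "C \<omega> \<le> \<bar>B\<bar>" using that by linarith
      then have "C \<omega> * (KK * m a) \<le> \<bar>B\<bar> * (KK * m a)" by (rule mult_right_mono) (use KK_nn m_nn in simp)
      then show ?thesis by (simp add: mult_ac)
    qed
    have Fb: "AE \<omega> in M. \<bar>Fn \<omega>\<bar> \<le> \<bar>B\<bar> * KK * m 1"
      using co B
    proof eventually_elim
      case (elim \<omega>)
      then show ?case using Cle[of \<omega> 1] by linarith
    qed
    have lim: "\<forall>\<epsilon>>0. \<forall>\<^sub>F \<alpha> in at_right 0. AE \<omega> in M. \<bar>I \<alpha> \<omega> - Fn \<omega>\<bar> \<le> \<epsilon>"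
    proof (intro allI impI)
      fix \<epsilon> :: real assume e: "0 < \<epsilon>"
      have "((\<lambda>\<alpha>. \<bar>B\<bar> * KK * m \<alpha>) \<longlongrightarrow> \<bar>B\<bar> * KK * 0) (at_right 0)"
        by (intro tendsto_intros m_lim)
      then have "\<forall>\<^sub>F \<alpha> in at_right 0. \<bar>B\<bar> * KK * m \<alpha> < \<epsilon>" using e by (simp add: order_tendstoD(2))
      then show "\<forall>\<^sub>F \<alpha> in at_right 0. AE \<omega> in M. \<bar>I \<alpha> \<omega> - Fn \<omega>\<bar> \<le> \<epsilon>"
        using ev01
      proof eventually_elim
        case (elim \<alpha>)
        note a = elim
        show ?case using co B
        proof eventually_elim
          case (elim \<omega>)
          then show ?case using a Cle[of \<omega> \<alpha>] by fastforce
        qed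
      qed
    qed
    show "\<exists>F. F \<in> borel_measurable M \<and> (\<exists>B. AE \<omega> in M. \<bar>F \<omega>\<bar> \<le> B) \<and>
            (\<forall>\<epsilon>>0. \<forall>\<^sub>F \<alpha> in at_right 0.
               AE \<omega> in M. \<bar>(LINT z:{z. \<alpha> < \<bar>z\<bar> \<and> \<bar>z\<bar> \<le> 1}|\<nu>. g \<omega> z * dc \<omega> z) - F \<omega>\<bar> \<le> \<epsilon>)"
      using Fm Fb lim unfolding I_def by blast
  qed
qed


end
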